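(* Let $G$ be a graph on vertex set $[n]$ given as a dynamic stream of edge updates $(i,j,\Delta)$ with $\Delta\in\{+1,-1\}$, where at the end of the stream every edge has net multiplicity $0$ or $1$ and the stream length is polynomial in $n$. There is a streaming interactive proof that verifies (with constant probability of error) the number of triangles in $G$ with cost $(\log^2 n, \log^2 n)$, i.e. verifier space $O(\log^2 n)$ bits and total communication $O(\log^2 n)$ bits.
   Context: A streaming interactive proof (SIP) for a function $f$ of a data stream $\tau$: a randomized verifier $V$ reads $\tau$ once in a streaming fashion (as does the prover $P$); after the stream has passed, $V$ and $P$ exchange messages, after which $V$ outputs a value or $\perp$ (rejection). There must be a prover strategy causing $V$ to output $f(\tau)$ with probability at least $2/3$, and for every prover strategy $V$ must output a value in $\{f(\tau),\perp\}$ with probability at least $2/3$. Cost $(A,B)$ means verifier space $O(A)$ bits and total communication $O(B)$ bits. A triangle is a set of three vertices pairwise joined by edges. *)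

theory Defs
  imports "HOL-Probability.Probability"
begin

type_synonym update = "nat \<times> nat \<times> int"

definition mult :: "update list \<Rightarrow> nat \<Rightarrow> nat \<Rightarrow> int" where
  "mult \<tau> i j = sum_list (map (\<lambda>(a, b, d). if {a, b} = {i, j} then d else 0) \<tau>)"

definition valid_stream :: "nat \<Rightarrow> update list \<Rightarrow> bool" where
  "valid_stream n \<tau> \<longleftrightarrow>
     (\<forall>(i, j, d) \<in> set \<tau>. i < n \<and> j < n \<and> i \<noteq> j \<and> (d = 1 \<or> d = -1)) \<and>
     (\<forall>i j. i < n \<longrightarrow> j < n \<longrightarrow> i \<noteq> j \<longrightarrow> mult \<tau> i j = 0 \<or> mult \<tau> i j = 1)"

definition triangles :: "nat \<Rightarrow> update list \<Rightarrow> nat" where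
  "triangles n \<tau> = card {T. T \<subseteq> {..<n} \<and> card T = 3 \<and>
       (\<forall>x\<in>T. \<forall>y\<in>T. x \<noteq> y \<longrightarrow> mult \<tau> x y = 1)}"

text \<open>Memory states are natural numbers;
  a verifier with S bits of space uses only states below 2^S.
  v_step: processes one stream update (fresh randomness allowed);
  v_query i s: in round i, produces the verifier message and new state;
  v_receive i s a: processes prover answer a in round i;
  v_out: final output, None meaning rejection.\<close>
record sip_verifier =
  v_init :: "nat pmf"
  v_step :: "nat \<Rightarrow> update \<Rightarrow> nat pmf"
  v_query :: "nat \<Rightarrow> nat \<Rightarrow> (bool list \<times> nat) pmf"
  v_receive :: "nat \<Rightarrow> nat \<Rightarrow> bool list \<Rightarrow> nat pmf"
  v_out :: "nat \<Rightarrow> nat option"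
  v_rounds :: nat

definition space_bounded :: "nat \<Rightarrow> sip_verifier \<Rightarrow> bool" where
  "space_bounded S V \<longleftrightarrow>
     set_pmf (v_init V) \<subseteq> {..<2^S} \<and>
     (\<forall>s<2^S. \<forall>u. set_pmf (v_step V s u) \<subseteq> {..<2^S}) \<and>
     (\<forall>i. \<forall>s<2^S. snd ` set_pmf (v_query V i s) \<subseteq> {..<2^S}) \<and>
     (\<forall>i a. \<forall>s<2^S. set_pmf (v_receive V i s a) \<subseteq> {..<2^S})"

definition stream_run :: "sip_verifier \<Rightarrow> update list \<Rightarrow> nat pmf" where
  "stream_run V \<tau> = foldl (\<lambda>p u. bind_pmf p (\<lambda>s. v_step V s u)) (v_init V) \<tau>"

text \<open>A prover strategy (for a fixed stream, which it has seen) maps the list of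
  verifier messages received so far to its next message. The transcript is the list of
  (verifier message, prover message) pairs.\<close>
type_synonym prover = "bool list list \<Rightarrow> bool list"

primrec interact :: "sip_verifier \<Rightarrow> prover \<Rightarrow> nat \<Rightarrow> nat \<Rightarrow> (bool list \<times> bool list) list
     \<Rightarrow> (nat \<times> (bool list \<times> bool list) list) pmf" where
  "interact V P 0 s tr = return_pmf (s, tr)"
| "interact V P (Suc k) s tr =
     bind_pmf (v_query V (length tr) s) (\<lambda>(m, s').
       let a = P (map fst tr @ [m]) in
       bind_pmf (v_receive V (length tr) s' a) (\<lambda>s''. interact V P k s'' (tr @ [(m, a)])))"

definition run :: "sip_verifier \<Rightarrow> prover \<Rightarrow> update list \<Rightarrow> (nat option \<times> (bool list \<times> bool list) list) pmf" where
  "run V P \<tau> = map_pmf (\<lambda>(s, tr). (v_out V s, tr))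
                (bind_pmf (stream_run V \<tau>) (\<lambda>s. interact V P (v_rounds V) s []))"

definition comm :: "(bool list \<times> bool list) list \<Rightarrow> nat" where
  "comm tr = sum_list (map (\<lambda>(m, a). length m + length a) tr)"

text \<open>V is an SIP for f on the streams satisfying 'valid', with space S bits and
  communication C bits (communication measured on the honest execution).\<close>
definition is_SIP :: "(update list \<Rightarrow> bool) \<Rightarrow> (update list \<Rightarrow> nat) \<Rightarrow> nat \<Rightarrow> nat \<Rightarrow> sip_verifier \<Rightarrow> bool" where
  "is_SIP valid f S C V \<longleftrightarrow> space_bounded S V \<and>
     (\<forall>\<tau>. valid \<tau> \<longrightarrow>
        (\<exists>P. measure_pmf.prob (run V P \<tau>) {x. fst x = Some (f \<tau>)} \<ge> 2/3 \<and>
             (\<forall>x\<in>set_pmf (run V P \<tau>). comm (snd x) \<le> C)) \<and>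
        (\<forall>P. measure_pmf.prob (run V P \<tau>) {x. fst x = Some (f \<tau>) \<or> fst x = None} \<ge> 2/3))"

end

theory Submission
  imports Defs "HOL-Computational_Algebra.Primes" "HOL-Computational_Algebra.Polynomial"
    "HOL-Combinatorics.Multiset_Permutations"
begin


lemma mult_Suc_card:
  fixes p n :: nat assumes p: "prime p"
  shows "multiplicity p (Suc n) = card {i\<in>{1..Suc n}. p ^ i dvd Suc n}"
proof -
  let ?v = "multiplicity p (Suc n)"
  have iff: "p ^ i dvd Suc n \<longleftrightarrow> i \<le> ?v" for i
    apply (rule power_dvd_iff_le_multiplicity) using p  by (auto simp: prime_gt_1_nat)
  have "p ^ ?v dvd Suc n" by (rule multiplicity_dvd)
  then have "p ^ ?v \<le> Suc n" by (rule dvd_imp_le) simp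
  moreover have "?v < 2 ^ ?v" by (rule less_exp)
  moreover have "2 ^ ?v \<le> p ^ ?v" using p by (simp add: power_mono prime_ge_2_nat)
  ultimately have le: "?v \<le> Suc n" by linarith
  have "{i\<in>{1..Suc n}. p ^ i dvd Suc n} = {1..?v}" unfolding iff using le by auto
  then show ?thesis by simp
qed
lemma legendre:
  fixes p n :: nat assumes p: "prime p"
  shows "multiplicity p (fact n) = (\<Sum>i\<in>{1..n}. n div p ^ i)"
proof (induction n)
  case 0
  then show ?case by simp
next
  case (Suc n)
  have pp: "p > 0" using p prime_gt_0_nat by blast
  have "multiplicity p (fact (Suc n) :: nat) = multiplicity p (Suc n * fact n)" by simp
  also have "\<dots> = multiplicity p (Suc n) + multiplicity p (fact n :: nat)"
    using p by (intro prime_elem_multiplicity_mult_distrib) auto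
  also have "\<dots> = card {i\<in>{1..Suc n}. p ^ i dvd Suc n} + (\<Sum>i\<in>{1..n}. n div p ^ i)"
    using Suc mult_Suc_card[OF p] by simp
  also have "(\<Sum>i\<in>{1..n}. n div p ^ i) = (\<Sum>i\<in>{1..Suc n}. n div p ^ i)"
  proof -
    have "n < 2 ^ Suc n" using less_exp[of n] by (simp del: power_Suc add: less_trans[OF _ power_strict_increasing[of n "Suc n" 2]])
    also have "\<dots> \<le> p ^ Suc n" using p by (intro power_mono) (auto simp: prime_ge_2_nat)
    finally have "n div p ^ Suc n = 0" by simp
    then show ?thesis by simp
  qed
  also have "card {i\<in>{1..Suc n}. p ^ i dvd Suc n} = (\<Sum>i\<in>{1..Suc n}. if p ^ i dvd Suc n then 1 else 0)"
    by (simp only: card_eq_sum sum.inter_filter[OF finite_atLeastAtMost])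
  also have "\<dots> + (\<Sum>i\<in>{1..Suc n}. n div p ^ i) = (\<Sum>i\<in>{1..Suc n}. Suc n div p ^ i)"
  proof -
    have "Suc n div p ^ i = n div p ^ i + (if p ^ i dvd Suc n then 1 else 0)" for i
      using div_Suc[of n "p^i"] by (simp add: dvd_eq_mod_eq_0)
    then show ?thesis by (simp add: sum.distrib)
  qed
  finally show ?case .
qed


lemma div2_bound: "(2*M) div q \<le> 2 * (M div q) + 1" for M q :: nat
proof (cases "q = 0")
  case False
  have h: "M = M div q * q + M mod q" by simp
  have "2*M = 2*(M div q * q + M mod q)" using h by simp
  also have "\<dots> = (2*(M div q)) * q + 2*(M mod q)" by (simp only: distrib_left mult.assoc)
  finally have "2*M = (2*(M div q)) * q + 2*(M mod q)" .
  moreover have "2*(M mod q) < 2 * q" using False by simp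
  ultimately have "2*M < (2*(M div q) + 2) * q" by (simp add: algebra_simps)
  then have "2*M div q < 2*(M div q) + 2" using False by (simp add: div_less_iff_less_mult)
  then show ?thesis by simp
qed simp

lemma pow_gt: "prime (p::nat) \<Longrightarrow> n < p ^ n"
proof -
  assume p: "prime p"
  have "n < 2 ^ n" by (rule less_exp)
  also have "\<dots> \<le> p ^ n" using p by (intro power_mono) (auto simp: prime_ge_2_nat)
  finally show ?thesis .
qed

lemma mult2_div_le: "2 * (M div q) \<le> (2*M) div q" for M q :: nat
proof (cases "q = 0")
  case False
  have A: "2 * (M div q) * q \<le> 2*M" using div_times_less_eq_dividend[of M q] by (simp only: mult.assoc mult_le_mono2)
  then show ?thesis using div_le_mono[OF A, of q] False by simp
qed simp

lemma binom_mult_bound: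
  fixes p M :: nat assumes p: "prime p" and M: "M > 0"
  shows "p ^ multiplicity p ((2*M) choose M) \<le> 2*M"
proof -
  let ?C = "(2*M) choose M"
  have C0: "?C > 0" by simp
  have "fact (2*M) = (fact M * fact M * ?C :: nat)"
    using binomial_fact_lemma[of M "2*M"] by (simp add: mult_2)
  then have "multiplicity p (fact (2*M) :: nat) = multiplicity p (fact M :: nat) + multiplicity p (fact M :: nat) + multiplicity p ?C"
    using p by (simp add: prime_elem_multiplicity_mult_distrib)
  then have v: "multiplicity p ?C = (\<Sum>i\<in>{1..2*M}. (2*M) div p ^ i) - 2 * (\<Sum>i\<in>{1..M}. M div p ^ i)"
    using legendre[OF p] by simp
  have ext: "(\<Sum>i\<in>{1..M}. M div p ^ i) = (\<Sum>i\<in>{1..2*M}. M div p ^ i)"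
  proof (rule sum.mono_neutral_left)
    show "\<forall>i\<in>{1..2 * M} - {1..M}. M div p ^ i = 0"
    proof
      fix i assume "i \<in> {1..2 * M} - {1..M}"
      then have "M < i" by auto
      then have "M < p ^ i" using pow_gt[OF p, of i] by linarith
      then show "M div p ^ i = 0" by simp
    qed
  qed auto
  define E where "E = {i\<in>{1..2*M}. p ^ i \<le> 2*M}"
  have "multiplicity p ?C = (\<Sum>i\<in>{1..2*M}. (2*M) div p ^ i - 2 * (M div p ^ i))"
    unfolding v ext sum_distrib_left
    by (rule sum_subtractf_nat[symmetric]) (rule mult2_div_le)
  also have "\<dots> \<le> (\<Sum>i\<in>{1..2*M}. if p ^ i \<le> 2*M then 1 else 0)"
  proof (rule sum_mono)
    fix i assume i: "i \<in> {1..2*M}"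
    show "(2*M) div p ^ i - 2 * (M div p ^ i) \<le> (if p ^ i \<le> 2*M then 1 else 0)"
    proof (cases "p ^ i \<le> 2*M")
      case True then show ?thesis using div2_bound[of M "p^i"] by simp
    next
      case False then have "2*M < p^i" by simp
      then show ?thesis using False by simp
    qed
  qed
  also have "\<dots> = card E" unfolding E_def
    by (simp only: card_eq_sum sum.inter_filter[OF finite_atLeastAtMost])
  finally have vE: "multiplicity p ?C \<le> card E" .
  have "p ^ card E \<le> 2*M"
  proof (rule ccontr)
    assume A: "\<not> ?thesis"
    have "E \<subseteq> {1..<card E}"
    proof
      fix i assume i: "i \<in> E"
      have "i < card E"
      proof (rule ccontr)
        assume "\<not> i < card E"
        then have "p ^ card E \<le> p ^ i" using p by (intro power_increasing) (use prime_ge_1_nat in auto)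
        then show False using A i by (auto simp: E_def)
      qed
      then show "i \<in> {1..<card E}" using i by (auto simp: E_def)
    qed
    then have "card E \<le> card {1..<card E}" by (intro card_mono) auto
    then show False using A M by (cases "card E") auto
  qed
  moreover have "p ^ multiplicity p ?C \<le> p ^ card E"
    using vE p by (intro power_increasing) (use prime_ge_1_nat in auto)
  ultimately show ?thesis by linarith
qed


lemma sq_le_pow2: "N \<ge> 8 \<Longrightarrow> 2 * N^2 \<le> 2 ^ N" for N :: nat
proof (induction N rule: nat_induct_at_least)
  case base then show ?case by simp
next
  case (Suc N)
  have "2 * (Suc N)^2 \<le> 2 * (2 * N^2)"
  proof -
    have "8 * N \<le> N * N" using Suc.hyps by (intro mult_le_mono1)
    then have "2 * N + 1 \<le> N * N" using Suc.hyps by linarith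
    then show ?thesis by (simp add: power2_eq_square)
  qed
  also have "\<dots> \<le> 2 * 2 ^ N" using Suc.IH by simp
  finally show ?case by simp
qed

lemma prime_window:
  fixes N :: nat assumes N: "N \<ge> 8"
  shows "\<exists>p. prime p \<and> N < p \<and> p \<le> 2 * N^2"
proof (rule ccontr)
  assume no: "\<not> ?thesis"
  define M where "M = N^2"
  have M0: "M > 0" using N by (simp add: M_def)
  let ?C = "(2*M) choose M"
  have C0: "?C > 0" by simp
  have Cdvd: "?C dvd fact (2*M)"
    using binomial_fact_lemma[of M "2*M"] by (metis dvd_triv_right mult_2 le_add2 add_diff_cancel_left')
  have pf: "q \<le> N" if q: "q \<in> prime_factors ?C" for q
  proof -
    have qp: "prime q" and qd: "q dvd ?C" using q by (auto simp: in_prime_factors_iff)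
    then have "q dvd fact (2*M)" using Cdvd dvd_trans by blast
    then have "q \<le> 2*M" using qp prime_dvd_fact_iff by blast
    then show ?thesis using no qp unfolding M_def by (meson not_le)
  qed
  have cardpf: "card (prime_factors ?C) \<le> N"
  proof -
    have "prime_factors ?C \<subseteq> {1..N}" using pf prime_ge_1_nat by (auto simp: in_prime_factors_iff)
    then show ?thesis using card_mono[of "{1..N}"] by fastforce
  qed
  have "?C = (\<Prod>q\<in>prime_factors ?C. q ^ multiplicity q ?C)" using prime_factorization_nat[OF C0] .
  also have "\<dots> \<le> (2*M) ^ N"
    by (rule prod_le_power) (use binom_mult_bound[OF _ M0] cardpf M0 in \<open>auto simp: in_prime_factors_iff\<close>)
  finally have Cle: "?C \<le> (2*M)^N" .
  have "4^M / (2*real M) \<le> real ?C" using central_binomial_lower_bound[OF M0] .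
  then have "real (4^M) \<le> real (2*M) * real ?C" using M0 by (simp add: field_simps)
  then have "4^M \<le> 2*M * ?C" by (simp only: of_nat_le_iff of_nat_mult[symmetric])
  also have "\<dots> \<le> 2*M * (2*M)^N" using Cle by simp
  also have "\<dots> = (2*M)^(N+1)" by simp
  also have "\<dots> \<le> (2^N)^(N+1)" using sq_le_pow2[OF N] by (intro power_mono) (auto simp: M_def)
  also have "\<dots> = 2^(N*(N+1))" by (simp only: power_mult)
  finally have "(2::nat)^(2*M) \<le> 2^(N*(N+1))" by (simp only: power_mult) simp
  then have "2*M \<le> N*(N+1)" using power_increasing_iff[of "2::nat" "2*M" "N*(N+1)"] by simp
  moreover have "N*(N+1) < 2*M" using N by (simp add: M_def power2_eq_square algebra_simps)
  ultimately show False by simp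
qed


fun chi :: "nat \<Rightarrow> int list \<Rightarrow> int" where
  "chi i [] = 1"
| "chi i (u # us) = (if odd i then u else 1 - u) * chi (i div 2) us"

fun bv :: "nat \<Rightarrow> nat \<Rightarrow> int list" where
  "bv 0 i = []"
| "bv (Suc l) i = (if odd i then 1 else 0) # bv l (i div 2)"

definition Bools :: "nat \<Rightarrow> int list set" where
  "Bools k = {xs. set xs \<subseteq> {0,1} \<and> length xs = k}"

lemma finite_Bools[simp]: "finite (Bools k)"
  unfolding Bools_def by (rule finite_lists_length_eq) simp

lemma card_Bools: "card (Bools k) = 2 ^ k"
proof -
  have "card {0::int,1} = 2" by simp
  then show ?thesis unfolding Bools_def by (simp add: card_lists_length_eq numeral_2_eq_2)
qed

lemma length_bv[simp]: "length (bv l i) = l"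
  by (induction l arbitrary: i) auto

lemma bv_Bools: "bv l i \<in> Bools l"
  unfolding Bools_def by (induction l arbitrary: i) auto

lemma chi_bv: "i < 2 ^ l \<Longrightarrow> j < 2 ^ l \<Longrightarrow> chi i (bv l j) = (if i = j then 1 else 0)"
proof (induction l arbitrary: i j)
  case 0 then show ?case by simp
next
  case (Suc l)
  have i2: "i div 2 < 2 ^ l" "j div 2 < 2 ^ l" using Suc.prems by auto
  have eq: "i = j \<longleftrightarrow> (odd i = odd j \<and> i div 2 = j div 2)"
    by (metis div_mult_mod_eq odd_iff_mod_2_eq_one not_mod_2_eq_1_eq_0)
  show ?case using Suc.IH[OF i2] eq by auto
qed

lemma inj_bv: "inj_on (bv l) {..<2^l}"
proof (rule inj_onI)
  fix i j assume ij: "i \<in> {..<2^l}" "j \<in> {..<2^l}" "bv l i = bv l j"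
  have a: "i < 2^l" "j < 2^l" using ij by auto
  have "chi i (bv l i) = 1" using chi_bv[OF a(1) a(1)] by simp
  then have "chi i (bv l j) = 1" using ij by simp
  then show "i = j" using chi_bv[OF a(1) a(2)] by (auto split: if_splits)
qed

lemma bv_image: "bv l ` {..<2^l} = Bools l"
proof -
  have "bv l ` {..<2^l} \<subseteq> Bools l" using bv_Bools by auto
  moreover have "card (bv l ` {..<2^l}) = card (Bools l)"
    using card_image[OF inj_bv] card_Bools by simp
  ultimately show ?thesis by (intro card_subset_eq) auto
qed

lemma sum_Bools_bv: "(\<Sum>x\<in>Bools l. f x) = (\<Sum>i<2^l. f (bv l i))"
  using sum.reindex[OF inj_bv, of f] bv_image by simp

lemma Bools_Suc: "Bools (Suc k) = Cons 0 ` Bools k \<union> Cons 1 ` Bools k"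
proof
  show "Bools (Suc k) \<subseteq> Cons 0 ` Bools k \<union> Cons 1 ` Bools k"
  proof
    fix xs assume "xs \<in> Bools (Suc k)"
    then obtain x ys where "xs = x # ys" "x \<in> {0,1}" "ys \<in> Bools k"
      unfolding Bools_def by (cases xs) auto
    then show "xs \<in> Cons 0 ` Bools k \<union> Cons 1 ` Bools k" by auto
  qed
qed (auto simp: Bools_def)

lemma sum_Bools_Suc: "(\<Sum>b\<in>Bools (Suc k). f b) = (\<Sum>b\<in>Bools k. f (0 # b) + f (1 # b))"
proof -
  have "(\<Sum>b\<in>Bools (Suc k). f b) = (\<Sum>b\<in>Cons 0 ` Bools k. f b) + (\<Sum>b\<in>Cons 1 ` Bools k. f b)"
    unfolding Bools_Suc by (rule sum.union_disjoint) auto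
  also have "\<dots> = (\<Sum>b\<in>Bools k. f (0 # b)) + (\<Sum>b\<in>Bools k. f (1 # b))"
    by (simp add: sum.reindex)
  finally show ?thesis by (simp add: sum.distrib)
qed

lemma sum_Bools_append: "(\<Sum>b\<in>Bools (a + c). f b) = (\<Sum>x\<in>Bools a. \<Sum>y\<in>Bools c. f (x @ y))"
proof (induction a arbitrary: f)
  case 0
  have "Bools 0 = {[]}" by (auto simp: Bools_def)
  then show ?case by simp
next
  case (Suc a)
  have "(\<Sum>b\<in>Bools (Suc a + c). f b) = (\<Sum>b\<in>Bools (a + c). f (0 # b) + f (1 # b))"
    using sum_Bools_Suc[where k="a + c" and f=f] by simp
  also have "\<dots> = (\<Sum>x\<in>Bools a. \<Sum>y\<in>Bools c. f (0 # x @ y) + f (1 # x @ y))"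
    using Suc.IH[of "\<lambda>b. f (0 # b) + f (1 # b)"] by simp
  also have "\<dots> = (\<Sum>x\<in>Bools (Suc a). \<Sum>y\<in>Bools c. f (x @ y))"
    using sum_Bools_Suc[where k=a and f="\<lambda>x. \<Sum>y\<in>Bools c. f (x @ y)"] by (simp add: sum.distrib)
  finally show ?case .
qed

definition degle :: "nat \<Rightarrow> (int \<Rightarrow> int) \<Rightarrow> bool" where
  "degle d f \<longleftrightarrow> (\<exists>q::int poly. degree q \<le> d \<and> (\<forall>X. f X = poly q X))"

lemma degle_const: "degle d (\<lambda>X. c)"
  unfolding degle_def by (rule exI[of _ "[:c:]"]) simp

lemma degle_X: "degle 1 (\<lambda>X. a * X + b)"
  unfolding degle_def by (rule exI[of _ "[:b, a:]"]) (simp add: algebra_simps)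

lemma degle_mono: "degle d f \<Longrightarrow> d \<le> d' \<Longrightarrow> degle d' f"
  unfolding degle_def by (blast intro: order_trans)

lemma degle_add: "degle d f \<Longrightarrow> degle d g \<Longrightarrow> degle d (\<lambda>X. f X + g X)"
  unfolding degle_def
proof (elim exE conjE)
  fix q r :: "int poly" assume "degree q \<le> d" "\<forall>X. f X = poly q X" "degree r \<le> d" "\<forall>X. g X = poly r X"
  then show "\<exists>s. degree s \<le> d \<and> (\<forall>X. f X + g X = poly s X)"
    by (intro exI[of _ "q + r"]) (auto intro: order_trans[OF degree_add_le_max])
qed

lemma degle_mult: "degle a f \<Longrightarrow> degle b g \<Longrightarrow> degle (a + b) (\<lambda>X. f X * g X)"
  unfolding degle_def
proof (elim exE conjE)
  fix q r :: "int poly" assume "degree q \<le> a" "\<forall>X. f X = poly q X" "degree r \<le> b" "\<forall>X. g X = poly r X"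
  then show "\<exists>s. degree s \<le> a + b \<and> (\<forall>X. f X * g X = poly s X)"
    by (intro exI[of _ "q * r"]) (auto intro: order_trans[OF degree_mult_le])
qed

lemma degle_sum: "(\<And>i. i \<in> A \<Longrightarrow> degle d (f i)) \<Longrightarrow> degle d (\<lambda>X. \<Sum>i\<in>A. f i X)"
proof (induction A rule: infinite_finite_induct)
  case (infinite A) then show ?case by (simp add: degle_const)
next
  case empty then show ?case by (simp add: degle_const)
next
  case (insert x F) then show ?case by (simp add: degle_add)
qed

lemma chi_upd: "degle (if k < length u then 1 else 0) (\<lambda>X. chi i (u[k := X]))"
proof (induction u arbitrary: i k)
  case Nil then show ?case by (simp add: degle_const)
next
  case (Cons v us)
  show ?case
  proof (cases k)
    case 0
    have "degle (1 + 0) (\<lambda>X. (if odd i then X else 1 - X) * chi (i div 2) us)"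
    proof (rule degle_mult)
      show "degle 1 (\<lambda>X. if odd i then X else 1 - X)"
        using degle_X[of 1 0] degle_X[of "-1" 1] by (cases "odd i") auto
    qed (rule degle_const)
    then show ?thesis using 0 by simp
  next
    case (Suc k')
    have "degle (0 + (if k' < length us then 1 else 0)) (\<lambda>X. (if odd i then v else 1 - v) * chi (i div 2) (us[k' := X]))"
      by (rule degle_mult[OF degle_const Cons.IH])
    then show ?thesis using Suc by simp
  qed
qed


definition Atil :: "nat \<Rightarrow> (nat \<Rightarrow> nat \<Rightarrow> int) \<Rightarrow> int list \<Rightarrow> int list \<Rightarrow> int" where
  "Atil l A x y = (\<Sum>i<2^l. \<Sum>j<2^l. A i j * chi i x * chi j y)"

definition Fz :: "nat \<Rightarrow> (nat \<Rightarrow> nat \<Rightarrow> int) \<Rightarrow> int list \<Rightarrow> int" where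
  "Fz l A z = Atil l A (take l z) (take l (drop l z)) * Atil l A (take l (drop l z)) (drop (2*l) z)
      * Atil l A (take l z) (drop (2*l) z)"

definition Pz :: "nat \<Rightarrow> (nat \<Rightarrow> nat \<Rightarrow> int) \<Rightarrow> nat \<Rightarrow> int list \<Rightarrow> int" where
  "Pz l A k pre = (\<Sum>b\<in>Bools (3*l - k). Fz l A (pre @ b))"

lemma Atil_upd: "degle ((if k1 < length u then 1 else 0) + (if k2 < length v then 1 else 0))
    (\<lambda>X. Atil l A (u[k1:=X]) (v[k2:=X]))"
  unfolding Atil_def
proof (intro degle_sum)
  fix i j
  have "degle ((0 + (if k1 < length u then 1 else 0)) + (if k2 < length v then 1 else 0))
     (\<lambda>X. A i j * chi i (u[k1:=X]) * chi j (v[k2:=X]))"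
    by (intro degle_mult degle_const chi_upd)
  then show "degle ((if k1 < length u then 1 else 0) + (if k2 < length v then 1 else 0))
     (\<lambda>X. A i j * chi i (u[k1:=X]) * chi j (v[k2:=X]))" by simp
qed

lemma blk1: "take l (z[k:=X]) = (take l z)[k:=X]"
  by (rule take_update_swap)

lemma blk2: "take l (drop l (z[k:=X])) = (take l (drop l z))[(if l \<le> k then k - l else l):=X]"
proof (cases "l \<le> k")
  case True then show ?thesis by (simp add: drop_update_swap take_update_swap)
next
  case False
  then have "take l (drop l (z[k:=X])) = take l (drop l z)" by simp
  also have "\<dots> = (take l (drop l z))[l:=X]" by (rule list_update_beyond[symmetric]) simp
  finally show ?thesis using False by simp
qed

lemma blk3: "drop (2*l) (z[k:=X]) = (drop (2*l) z)[(if 2*l \<le> k then k - 2*l else length z):=X]"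
proof (cases "2*l \<le> k")
  case True then show ?thesis by (simp add: drop_update_swap)
next
  case False
  then have "drop (2*l) (z[k:=X]) = drop (2*l) z" by simp
  also have "\<dots> = (drop (2*l) z)[length z:=X]" by (rule list_update_beyond[symmetric]) simp
  finally show ?thesis using False by simp
qed

lemma Fz_upd:
  assumes "length z = 3*l" "k < 3*l"
  shows "degle 2 (\<lambda>X. Fz l A (z[k:=X]))"
proof -
  let ?x = "take l z" and ?y = "take l (drop l z)" and ?w = "drop (2*l) z"
  let ?ky = "if l \<le> k then k - l else l" and ?kw = "if 2*l \<le> k then k - 2*l else length z"
  define ix where "ix = (if k < length ?x then 1 else 0 :: nat)"
  define iy where "iy = (if ?ky < length ?y then 1 else 0 :: nat)"
  define iw where "iw = (if ?kw < length ?w then 1 else 0 :: nat)"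
  have s: "ix + iy + iw \<le> 1" using assms unfolding ix_def iy_def iw_def by auto
  have "degle ((ix + iy) + (iy + iw) + (ix + iw))
     (\<lambda>X. Atil l A (?x[k:=X]) (?y[?ky:=X]) * Atil l A (?y[?ky:=X]) (?w[?kw:=X]) * Atil l A (?x[k:=X]) (?w[?kw:=X]))"
    unfolding ix_def iy_def iw_def by (intro degle_mult Atil_upd)
  then have "degle 2
     (\<lambda>X. Atil l A (?x[k:=X]) (?y[?ky:=X]) * Atil l A (?y[?ky:=X]) (?w[?kw:=X]) * Atil l A (?x[k:=X]) (?w[?kw:=X]))"
    by (rule degle_mono) (use s in simp)
  then show ?thesis unfolding Fz_def blk1 blk2 blk3 .
qed

lemma Pz_split:
  assumes "k < 3*l"
  shows "Pz l A k pre = Pz l A (Suc k) (pre @ [0]) + Pz l A (Suc k) (pre @ [1])"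
proof -
  have e: "3*l - k = Suc (3*l - Suc k)" using assms by simp
  show ?thesis unfolding Pz_def e sum_Bools_Suc by (simp add: sum.distrib)
qed

lemma Bools_0: "Bools 0 = {[]}" by (auto simp: Bools_def)

lemma Pz_last: "Pz l A (3*l) pre = Fz l A pre"
  unfolding Pz_def by (simp add: Bools_0)

lemma Pz_deg:
  assumes "length pre = k" "k < 3*l"
  shows "degle 2 (\<lambda>X. Pz l A (Suc k) (pre @ [X]))"
  unfolding Pz_def
proof (intro degle_sum)
  fix b assume b: "b \<in> Bools (3*l - Suc k)"
  have eq: "pre @ [X] @ b = (pre @ [0] @ b)[k:=X]" for X
    using assms(1) by (simp add: list_update_append)
  have "degle 2 (\<lambda>X. Fz l A ((pre @ [0] @ b)[k:=X]))"
    using b assms by (intro Fz_upd) (auto simp: Bools_def)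
  moreover have "(\<lambda>X. Fz l A ((pre @ [X]) @ b)) = (\<lambda>X. Fz l A ((pre @ [0] @ b)[k:=X]))"
    by (rule ext, subst append_assoc, subst eq, rule refl)
  ultimately show "degle 2 (\<lambda>X. Fz l A ((pre @ [X]) @ b))" by simp
qed

lemma sum_ind: "(\<Sum>j'<N. f j' * (if j' = j then 1 else 0)) = (\<Sum>j'<N. if j' = j then f j' else (0::int))"
  by (intro sum.cong) auto

lemma Atil_bv: "i < 2^l \<Longrightarrow> j < 2^l \<Longrightarrow> Atil l A (bv l i) (bv l j) = A i j"
proof -
  assume ij: "i < 2^l" "j < 2^l"
  have "Atil l A (bv l i) (bv l j) = (\<Sum>i'<2^l. \<Sum>j'<2^l. A i' j' * (if i' = i then 1 else 0) * (if j' = j then 1 else 0))"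
    unfolding Atil_def by (intro sum.cong refl) (simp add: chi_bv ij)
  also have "\<dots> = (\<Sum>i'<2^l. if i' = i then (\<Sum>j'<2^l. if j' = j then A i' j' else 0) else 0)"
    by (intro sum.cong refl) (auto simp: sum_ind)
  also have "\<dots> = (\<Sum>j'<2^l. if j' = j then A i j' else 0)" using ij by (simp add: sum.delta sum_ind)
  also have "\<dots> = A i j" using ij by (subst sum.delta) auto
  finally show ?thesis .
qed

lemma Fz_app: "length x = l \<Longrightarrow> length y = l \<Longrightarrow> Fz l A (x @ y @ w) = Atil l A x y * Atil l A y w * Atil l A x w"
  by (simp add: Fz_def mult_2)

lemma Pz_0: "Pz l A 0 [] = (\<Sum>i<2^l. \<Sum>j<2^l. \<Sum>k<2^l. A i j * A j k * A i k)"
proof -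
  have e: "3*l - 0 = l + (l + l)" by simp
  have "Pz l A 0 [] = (\<Sum>b\<in>Bools (l + (l + l)). Fz l A b)" unfolding Pz_def e by simp
  also have "\<dots> = (\<Sum>x\<in>Bools l. \<Sum>y\<in>Bools l. \<Sum>w\<in>Bools l. Fz l A (x @ y @ w))"
    unfolding sum_Bools_append ..
  also have "\<dots> = (\<Sum>x\<in>Bools l. \<Sum>y\<in>Bools l. \<Sum>w\<in>Bools l. Atil l A x y * Atil l A y w * Atil l A x w)"
    by (intro sum.cong refl) (simp add: Fz_app Bools_def)
  also have "\<dots> = (\<Sum>i<2^l. \<Sum>j<2^l. \<Sum>k<2^l. Atil l A (bv l i) (bv l j) * Atil l A (bv l j) (bv l k) * Atil l A (bv l i) (bv l k))"
    unfolding sum_Bools_bv ..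
  also have "\<dots> = (\<Sum>i<2^l. \<Sum>j<2^l. \<Sum>k<2^l. A i j * A j k * A i k)"
    by (intro sum.cong refl) (simp add: Atil_bv)
  finally show ?thesis .
qed


lemma not_dvd_small: "x < p \<Longrightarrow> y < p \<Longrightarrow> x \<noteq> y \<Longrightarrow> \<not> int p dvd (int x - int y)" for x y p :: nat
proof
  assume a: "x < p" "y < p" "x \<noteq> y" and d: "int p dvd (int x - int y)"
  then have "int p dvd \<bar>int x - int y\<bar>" by simp
  moreover have "\<bar>int x - int y\<bar> > 0" using a by simp
  ultimately have "int p \<le> \<bar>int x - int y\<bar>" by (rule zdvd_imp_le)
  then show False using a by linarith
qed

lemma three_pts:
  fixes p x y z :: nat and a b c :: int
  assumes p: "prime p" and xyz: "x < p" "y < p" "z < p" "x \<noteq> y" "y \<noteq> z" "x \<noteq> z"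
    and r: "int p dvd a + b * int x + c * int x ^ 2" "int p dvd a + b * int y + c * int y ^ 2"
      "int p dvd a + b * int z + c * int z ^ 2"
  shows "int p dvd a \<and> int p dvd b \<and> int p dvd c"
proof -
  let ?P = "int p"
  have P: "prime ?P" using p by simp
  have k: "?P dvd b + c * (int u + int v)" if "u < p" "v < p" "u \<noteq> v"
     "?P dvd a + b * int u + c * int u ^ 2" "?P dvd a + b * int v + c * int v ^ 2" for u v
  proof -
    have "?P dvd (a + b * int u + c * int u ^ 2) - (a + b * int v + c * int v ^ 2)"
      using that by (intro dvd_diff)
    also have "(a + b * int u + c * int u ^ 2) - (a + b * int v + c * int v ^ 2) = (int u - int v) * (b + c * (int u + int v))"
      by (simp add: algebra_simps power2_eq_square)
    finally have "?P dvd (int u - int v) * (b + c * (int u + int v))" .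
    then show ?thesis using prime_dvd_mult_iff[OF P] not_dvd_small[OF that(1-3)] by blast
  qed
  have k1: "?P dvd b + c * (int x + int y)" using k xyz r by blast
  have k2: "?P dvd b + c * (int x + int z)" using k xyz r by blast
  have "?P dvd (b + c * (int x + int y)) - (b + c * (int x + int z))" using k1 k2 by (rule dvd_diff)
  also have "(b + c * (int x + int y)) - (b + c * (int x + int z)) = (int y - int z) * c" by (simp add: algebra_simps)
  finally have "?P dvd c" using prime_dvd_mult_iff[OF P] not_dvd_small[OF xyz(2,3,5)] by blast
  moreover have "?P dvd b"
  proof -
    have "?P dvd (b + c * (int x + int y)) - c * (int x + int y)" using k1 \<open>?P dvd c\<close> by (intro dvd_diff) auto
    then show ?thesis by simp
  qed
  moreover have "?P dvd a"
  proof -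
    have "?P dvd (a + b * int x + c * int x ^ 2) - b * int x - c * int x ^ 2"
      using r(1) \<open>?P dvd c\<close> \<open>?P dvd b\<close> by (intro dvd_diff) auto
    then show ?thesis by simp
  qed
  ultimately show ?thesis by blast
qed

lemma poly2: "degree (q::int poly) \<le> 2 \<Longrightarrow> poly q X = coeff q 0 + coeff q 1 * X + coeff q 2 * X ^ 2"
proof -
  assume d: "degree q \<le> 2"
  have "poly q X = (\<Sum>i\<le>degree q. coeff q i * X ^ i)" by (rule poly_altdef)
  also have "\<dots> = (\<Sum>i\<le>2. coeff q i * X ^ i)"
    by (rule sum.mono_neutral_left) (use d coeff_eq_0 in \<open>auto simp: le_degree\<close>)
  also have "\<dots> = coeff q 0 + coeff q 1 * X + coeff q 2 * X ^ 2"
    by (simp add: numeral_2_eq_2)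
  finally show ?thesis .
qed

lemma root_bound:
  fixes p :: nat and q :: "int poly"
  assumes p: "prime p" and d: "degree q \<le> 2" and nz: "\<not> int p dvd poly q X0"
  shows "card {x. x < p \<and> int p dvd poly q (int x)} \<le> 2"
proof (rule ccontr)
  let ?S = "{x. x < p \<and> int p dvd poly q (int x)}"
  assume "\<not> ?thesis"
  then have c3: "card ?S \<ge> 3" by simp
  have fin: "finite ?S" by simp
  obtain x where x: "x \<in> ?S" using c3 by (metis card.empty ex_in_conv not_numeral_le_zero)
  have "card (?S - {x}) \<ge> 2" using c3 x fin by (simp add: card_Diff_singleton)
  then obtain y where y: "y \<in> ?S - {x}" by (metis card.empty ex_in_conv not_numeral_le_zero)
  have "card (?S - {x} - {y}) \<ge> 1" using c3 x y fin by (simp add: card_Diff_singleton)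
  then obtain z where z: "z \<in> ?S - {x} - {y}" by (metis card.empty ex_in_conv not_one_le_zero)
  have "int p dvd coeff q 0 \<and> int p dvd coeff q 1 \<and> int p dvd coeff q 2"
    by (rule three_pts[OF p, of x y z]) (use x y z poly2[OF d] in auto)
  then have "int p dvd poly q X0" unfolding poly2[OF d] by auto
  then show False using nz by simp
qed


definition Rl :: "nat \<Rightarrow> nat \<Rightarrow> nat list set" where
  "Rl p m = {xs. set xs \<subseteq> {..<p} \<and> length xs = m}"

lemma finite_Rl[simp]: "finite (Rl p m)"
  unfolding Rl_def by (rule finite_lists_length_eq) simp

lemma card_Rl: "card (Rl p m) = p ^ m"
  unfolding Rl_def by (simp add: card_lists_length_eq)

lemma Rl_Suc: "Rl p (Suc m) = (\<lambda>(x, ys). x # ys) ` ({..<p} \<times> Rl p m)"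
proof
  show "Rl p (Suc m) \<subseteq> (\<lambda>(x, ys). x # ys) ` ({..<p} \<times> Rl p m)"
  proof
    fix xs assume "xs \<in> Rl p (Suc m)"
    then obtain x ys where "xs = x # ys" "x < p" "ys \<in> Rl p m" unfolding Rl_def by (cases xs) auto
    then show "xs \<in> (\<lambda>(x, ys). x # ys) ` ({..<p} \<times> Rl p m)" by force
  qed
qed (auto simp: Rl_def)

lemma count_prefix:
  fixes Bad :: "nat list \<Rightarrow> nat set"
  assumes "\<And>pre. card (Bad pre \<inter> {..<p}) \<le> 2" and "i < m"
  shows "card {xs \<in> Rl p m. xs ! i \<in> Bad (take i xs)} \<le> 2 * p ^ (m - 1)"
  using assms
proof (induction m arbitrary: i Bad)
  case 0 then show ?case by simp
next
  case (Suc m)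
  show ?case
  proof (cases i)
    case 0
    have "{xs \<in> Rl p (Suc m). xs ! i \<in> Bad (take i xs)} \<subseteq> (\<lambda>(x, ys). x # ys) ` ((Bad [] \<inter> {..<p}) \<times> Rl p m)"
      unfolding Rl_Suc using 0 by auto
    then have "card {xs \<in> Rl p (Suc m). xs ! i \<in> Bad (take i xs)} \<le> card ((\<lambda>(x, ys). x # ys) ` ((Bad [] \<inter> {..<p}) \<times> Rl p m))"
      by (intro card_mono) auto
    also have "\<dots> \<le> card ((Bad [] \<inter> {..<p}) \<times> Rl p m)" by (rule card_image_le) auto
    also have "\<dots> = card (Bad [] \<inter> {..<p}) * p ^ m" by (simp add: card_cartesian_product card_Rl)
    also have "\<dots> \<le> 2 * p ^ m" using Suc.prems(1)[of "[]"] by simp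
    finally show ?thesis by simp
  next
    case (Suc i')
    with Suc.prems have i': "i' < m" by simp
    let ?B = "\<lambda>x pre. Bad (x # pre)"
    have "{xs \<in> Rl p (Suc m). xs ! i \<in> Bad (take i xs)} \<subseteq> (\<Union>x\<in>{..<p}. Cons x ` {ys \<in> Rl p m. ys ! i' \<in> ?B x (take i' ys)})"
      unfolding Rl_Suc using Suc by auto
    then have "card {xs \<in> Rl p (Suc m). xs ! i \<in> Bad (take i xs)} \<le> card (\<Union>x\<in>{..<p}. Cons x ` {ys \<in> Rl p m. ys ! i' \<in> ?B x (take i' ys)})"
      by (intro card_mono) auto
    also have "\<dots> \<le> (\<Sum>x\<in>{..<p}. card (Cons x ` {ys \<in> Rl p m. ys ! i' \<in> ?B x (take i' ys)}))"
      by (rule card_UN_le) simp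
    also have "\<dots> \<le> (\<Sum>x\<in>{..<p}. 2 * p ^ (m - 1))"
    proof (rule sum_mono)
      fix x
      have "card (Cons x ` {ys \<in> Rl p m. ys ! i' \<in> ?B x (take i' ys)}) \<le> card {ys \<in> Rl p m. ys ! i' \<in> ?B x (take i' ys)}"
        by (rule card_image_le) simp
      also have "\<dots> \<le> 2 * p ^ (m - 1)" using Suc.IH[of "?B x" i'] Suc.prems(1) i' by simp
      finally show "card (Cons x ` {ys \<in> Rl p m. ys ! i' \<in> ?B x (take i' ys)}) \<le> 2 * p ^ (m - 1)" .
    qed
    also have "\<dots> = 2 * p ^ (Suc m - 1)" using i' by (cases m) auto
    finally show ?thesis .
  qed
qed


lemma mult_Nil[simp]: "mult [] i j = 0" by (simp add: mult_def)
lemma mult_Cons: "mult (u # \<tau>) i j = (case u of (a, b, d) \<Rightarrow> if {a, b} = {i, j} then d else 0) + mult \<tau> i j"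
  by (simp add: mult_def)
lemma mult_snoc: "mult (\<tau> @ [u]) i j = mult \<tau> i j + (case u of (a, b, d) \<Rightarrow> if {a, b} = {i, j} then d else 0)"
  by (simp add: mult_def)

lemma mult_sym: "mult \<tau> i j = mult \<tau> j i"
  by (simp add: mult_def insert_commute)

lemma mult_zero: "(\<And>a b d. (a, b, d) \<in> set \<tau> \<Longrightarrow> {a, b} \<noteq> {i, j}) \<Longrightarrow> mult \<tau> i j = 0"
proof (induction \<tau>)
  case Nil then show ?case by simp
next
  case (Cons u \<tau>)
  obtain a b d where u: "u = (a, b, d)" by (cases u) auto
  have "mult \<tau> i j = 0" using Cons.IH Cons.prems by auto
  moreover have "{a, b} \<noteq> {i, j}" using Cons.prems u by auto
  ultimately show ?case using u by (simp add: mult_Cons)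
qed

lemma mult_nz:
  assumes v: "valid_stream n \<tau>" and nz: "mult \<tau> i j \<noteq> 0"
  shows "i < n \<and> j < n \<and> i \<noteq> j"
proof (rule ccontr)
  assume bad: "\<not> ?thesis"
  have "mult \<tau> i j = 0"
  proof (rule mult_zero)
    fix a b d assume ab: "(a, b, d) \<in> set \<tau>"
    then have "a < n" "b < n" "a \<noteq> b" using v unfolding valid_stream_def by auto
    then show "{a, b} \<noteq> {i, j}" using bad by (auto simp: doubleton_eq_iff)
  qed
  then show False using nz by simp
qed

lemma mult_vals: "valid_stream n \<tau> \<Longrightarrow> mult \<tau> i j = 0 \<or> mult \<tau> i j = 1"
proof -
  assume v: "valid_stream n \<tau>"
  show ?thesis
  proof (cases "mult \<tau> i j = 0")
    case False
    then have "i < n \<and> j < n \<and> i \<noteq> j" using mult_nz[OF v] by blast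
    then show ?thesis using v unfolding valid_stream_def by blast
  qed simp
qed

lemma sum_Rl_Suc: "(\<Sum>xs\<in>Rl p (Suc m). g xs) = (\<Sum>x<p. \<Sum>ys\<in>Rl p m. g (x # ys))"
proof -
  have inj: "inj_on (\<lambda>(x, ys). x # ys) ({..<p} \<times> Rl p m)" by (auto simp: inj_on_def)
  have "(\<Sum>xs\<in>Rl p (Suc m). g xs) = (\<Sum>z\<in>{..<p} \<times> Rl p m. g ((\<lambda>(x, ys). x # ys) z))"
    unfolding Rl_Suc using sum.reindex[OF inj, of g] by (simp add: o_def)
  also have "\<dots> = (\<Sum>x<p. \<Sum>ys\<in>Rl p m. g (x # ys))"
    by (subst sum.cartesian_product) (simp add: case_prod_beta)
  finally show ?thesis .
qed

lemma Rl_0: "Rl p 0 = {[]}" by (auto simp: Rl_def)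

lemma sum_Rl_3: "(\<Sum>xs\<in>Rl p 3. g xs) = (\<Sum>i<p. \<Sum>j<p. \<Sum>k<p. g [i, j, k])"
  by (simp add: numeral_3_eq_3 sum_Rl_Suc Rl_0)

definition Fam :: "nat \<Rightarrow> update list \<Rightarrow> nat set set" where
  "Fam n \<tau> = {T. T \<subseteq> {..<n} \<and> card T = 3 \<and> (\<forall>x\<in>T. \<forall>y\<in>T. x \<noteq> y \<longrightarrow> mult \<tau> x y = 1)}"

lemma finite_Fam: "finite (Fam n \<tau>)"
  by (rule finite_subset[of _ "Pow {..<n}"]) (auto simp: Fam_def)

lemma card_Lset: "card {xs. distinct xs \<and> set xs \<in> Fam n \<tau>} = 6 * card (Fam n \<tau>)"
proof -
  have eq: "{xs. distinct xs \<and> set xs \<in> Fam n \<tau>} = (\<Union>T\<in>Fam n \<tau>. permutations_of_set T)"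
    by (auto simp: permutations_of_set_def)
  have "card (\<Union>T\<in>Fam n \<tau>. permutations_of_set T) = (\<Sum>T\<in>Fam n \<tau>. card (permutations_of_set T))"
    by (rule card_UN_disjoint) (auto simp: finite_Fam dest: permutations_of_setD)
  also have "\<dots> = (\<Sum>T\<in>Fam n \<tau>. 6)"
  proof (rule sum.cong)
    fix T assume "T \<in> Fam n \<tau>"
    then have "card T = 3" "finite T" by (auto simp: Fam_def intro: finite_subset)
    then show "card (permutations_of_set T) = 6" by (simp add: numeral_3_eq_3)
  qed simp
  finally show ?thesis using eq by simp
qed

lemma good_iff:
  assumes v: "valid_stream n \<tau>"
  shows "(mult \<tau> i j = 1 \<and> mult \<tau> j k = 1 \<and> mult \<tau> i k = 1) \<longleftrightarrow> (distinct [i, j, k] \<and> set [i, j, k] \<in> Fam n \<tau>)"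
proof
  assume g: "mult \<tau> i j = 1 \<and> mult \<tau> j k = 1 \<and> mult \<tau> i k = 1"
  then have a: "i < n \<and> j < n \<and> i \<noteq> j" "j < n \<and> k < n \<and> j \<noteq> k" "i < n \<and> k < n \<and> i \<noteq> k"
    using mult_nz[OF v] by (metis zero_neq_one)+
  have g': "mult \<tau> j i = 1" "mult \<tau> k j = 1" "mult \<tau> k i = 1" using g mult_sym by metis+
  show "distinct [i, j, k] \<and> set [i, j, k] \<in> Fam n \<tau>"
    using a g g' by (auto simp: Fam_def card_insert_if)
next
  assume "distinct [i, j, k] \<and> set [i, j, k] \<in> Fam n \<tau>"
  then show "mult \<tau> i j = 1 \<and> mult \<tau> j k = 1 \<and> mult \<tau> i k = 1" by (auto simp: Fam_def)
qed

lemma triangles_Fam: "triangles n \<tau> = card (Fam n \<tau>)"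
  by (simp add: triangles_def Fam_def)

lemma six_tri:
  assumes v: "valid_stream n \<tau>" and nN: "n \<le> N"
  shows "(\<Sum>i<N. \<Sum>j<N. \<Sum>k<N. mult \<tau> i j * mult \<tau> j k * mult \<tau> i k) = 6 * int (triangles n \<tau>)"
proof -
  let ?L = "{xs. distinct xs \<and> set xs \<in> Fam n \<tau>}"
  let ?g = "\<lambda>xs. if distinct xs \<and> set xs \<in> Fam n \<tau> then 1 else (0::int)"
  have t: "mult \<tau> i j * mult \<tau> j k * mult \<tau> i k = ?g [i, j, k]" for i j k
  proof -
    have "mult \<tau> i j * mult \<tau> j k * mult \<tau> i k = (if mult \<tau> i j = 1 \<and> mult \<tau> j k = 1 \<and> mult \<tau> i k = 1 then 1 else 0)"
      using mult_vals[OF v, of i j] mult_vals[OF v, of j k] mult_vals[OF v, of i k] by auto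
    then show ?thesis using good_iff[OF v] by simp
  qed
  have "(\<Sum>i<N. \<Sum>j<N. \<Sum>k<N. mult \<tau> i j * mult \<tau> j k * mult \<tau> i k) = (\<Sum>xs\<in>Rl N 3. ?g xs)"
    unfolding sum_Rl_3 t ..
  also have "\<dots> = int (card {xs \<in> Rl N 3. distinct xs \<and> set xs \<in> Fam n \<tau>})"
    by (simp add: sum.If_cases Int_def)
  also have "{xs \<in> Rl N 3. distinct xs \<and> set xs \<in> Fam n \<tau>} = ?L"
  proof -
    have "xs \<in> Rl N 3" if "distinct xs" "set xs \<in> Fam n \<tau>" for xs
    proof -
      have "card (set xs) = 3" "set xs \<subseteq> {..<n}" using that by (auto simp: Fam_def)
      then show ?thesis using that nN distinct_card[of xs] by (auto simp: Rl_def)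
    qed
    then show ?thesis by auto
  qed
  finally show ?thesis using card_Lset triangles_Fam by simp
qed

lemma tri_bound:
  assumes v: "valid_stream n \<tau>"
  shows "6 * triangles n \<tau> \<le> n ^ 3"
proof -
  have "{xs. distinct xs \<and> set xs \<in> Fam n \<tau>} \<subseteq> Rl n 3"
  proof
    fix xs assume "xs \<in> {xs. distinct xs \<and> set xs \<in> Fam n \<tau>}"
    then have "distinct xs" "card (set xs) = 3" "set xs \<subseteq> {..<n}" by (auto simp: Fam_def)
    then show "xs \<in> Rl n 3" using distinct_card[of xs] by (auto simp: Rl_def)
  qed
  then have "card {xs. distinct xs \<and> set xs \<in> Fam n \<tau>} \<le> card (Rl n 3)" by (intro card_mono) auto
  then show ?thesis using card_Lset triangles_Fam card_Rl by simp
qed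


fun encL :: "nat \<Rightarrow> nat list \<Rightarrow> nat" where
  "encL p [] = 0"
| "encL p (x # xs) = x + p * encL p xs"

definition decL :: "nat \<Rightarrow> nat \<Rightarrow> nat \<Rightarrow> nat list" where
  "decL p L s = map (\<lambda>k. s div p ^ k mod p) [0..<L]"

lemma encL_digit: "(\<forall>x\<in>set xs. x < p) \<Longrightarrow> k < length xs \<Longrightarrow> encL p xs div p ^ k mod p = xs ! k"
proof (induction xs arbitrary: k)
  case Nil then show ?case by simp
next
  case (Cons x xs)
  have p0: "p > 0" using Cons.prems by auto
  show ?case
  proof (cases k)
    case 0 then show ?thesis using Cons.prems by simp
  next
    case (Suc k')
    have "(x + p * encL p xs) div p = encL p xs" using Cons.prems p0 by simp
    moreover have "encL p (x # xs) div p ^ Suc k' = encL p (x # xs) div p div p ^ k'"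
      by (simp only: power_Suc div_mult2_eq)
    ultimately have "encL p (x # xs) div p ^ k = encL p xs div p ^ k'" using Suc by simp
    then show ?thesis using Cons Suc by simp
  qed
qed

lemma decL_encL: "(\<forall>x\<in>set xs. x < p) \<Longrightarrow> decL p (length xs) (encL p xs) = xs"
  unfolding decL_def by (rule nth_equalityI) (auto simp: encL_digit)

lemma encL_bound: "(\<forall>x\<in>set xs. x < p) \<Longrightarrow> encL p xs < p ^ length xs"
proof (induction xs)
  case Nil then show ?case by simp
next
  case (Cons x xs)
  then have xp: "x < p" and e: "encL p xs < p ^ length xs" by auto
  from e have "p * (encL p xs + 1) \<le> p * p ^ length xs" by (intro mult_le_mono2) simp
  then have "x + p * encL p xs < p * p ^ length xs" using xp by (simp add: algebra_simps)
  then show ?case by simp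
qed

fun bits :: "nat \<Rightarrow> nat \<Rightarrow> bool list" where
  "bits 0 x = []"
| "bits (Suc w) x = odd x # bits w (x div 2)"

fun frombits :: "bool list \<Rightarrow> nat" where
  "frombits [] = 0"
| "frombits (b # bs) = (if b then 1 else 0) + 2 * frombits bs"

lemma length_bits[simp]: "length (bits w x) = w"
  by (induction w arbitrary: x) auto

lemma frombits_bits: "x < 2 ^ w \<Longrightarrow> frombits (bits w x) = x"
proof (induction w arbitrary: x)
  case 0 then show ?case by simp
next
  case (Suc w)
  then have "x div 2 < 2 ^ w" by auto
  then show ?case using Suc.IH by simp
qed

record vst =
  okf :: bool
  tvv :: nat
  cvv :: nat
  a1v :: nat
  a2v :: nat
  a3v :: nat
  rvv :: "nat list"

definition toL :: "vst \<Rightarrow> nat list" where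
  "toL st = (if okf st then 1 else 0) # tvv st # cvv st # a1v st # a2v st # a3v st # rvv st"

definition fromL :: "nat list \<Rightarrow> vst" where
  "fromL xs = \<lparr>okf = (xs ! 0 \<noteq> 0), tvv = xs ! 1, cvv = xs ! 2, a1v = xs ! 3, a2v = xs ! 4, a3v = xs ! 5,
     rvv = drop 6 xs\<rparr>"

lemma fromL_toL: "fromL (toL st) = st"
  by (simp add: fromL_def toL_def)


locale proto =
  fixes l p w :: nat
  assumes p_prime: "prime p" and p_w: "p \<le> 2 ^ w" and l_pos: "0 < l"
begin

abbreviation mm :: nat where "mm \<equiv> 3 * l"

lemma p_gt1: "p > 1" using p_prime prime_gt_1_nat by blast
lemma p_pos: "p > 0" using p_gt1 by simp

definition enc :: "vst \<Rightarrow> nat" where "enc st = encL p (toL st)"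
definition dec :: "nat \<Rightarrow> vst" where "dec s = fromL (decL p (mm + 6) s)"
definition valid :: "vst \<Rightarrow> bool" where
  "valid st \<longleftrightarrow> tvv st < p \<and> cvv st < p \<and> a1v st < p \<and> a2v st < p \<and> a3v st < p \<and> rvv st \<in> Rl p mm"

lemma toL_lt: "valid st \<Longrightarrow> \<forall>x\<in>set (toL st). x < p"
  using p_gt1 by (auto simp: valid_def toL_def Rl_def)

lemma length_toL: "valid st \<Longrightarrow> length (toL st) = mm + 6"
  by (simp add: valid_def toL_def Rl_def)

lemma dec_enc: "valid st \<Longrightarrow> dec (enc st) = st"
  unfolding dec_def enc_def using decL_encL[OF toL_lt] length_toL fromL_toL by metis

lemma valid_dec: "valid (dec s)"
proof -
  let ?xs = "decL p (mm + 6) s"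
  have lt: "\<forall>x\<in>set ?xs. x < p" using p_pos by (auto simp: decL_def)
  have len: "length ?xs = mm + 6" by (simp add: decL_def)
  have "drop 6 ?xs \<in> Rl p mm" using lt len by (auto simp: Rl_def dest: in_set_dropD)
  moreover have "?xs ! k < p" if "k < mm + 6" for k using lt len that by auto
  ultimately show ?thesis unfolding dec_def valid_def fromL_def by simp
qed

lemma enc_bound: "valid st \<Longrightarrow> enc st < p ^ (mm + 6)"
  unfolding enc_def using encL_bound[OF toL_lt] length_toL by metis

definition modp :: "int \<Rightarrow> nat" where "modp z = nat (z mod int p)"

lemma modp_lt: "modp z < p"
  using p_pos unfolding modp_def by (simp add: nat_less_iff)

lemma int_modp: "int (modp z) = z mod int p"
  using p_pos unfolding modp_def by simp

definition xs_of :: "nat list \<Rightarrow> int list" where "xs_of r = map int (take l r)"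
definition ys_of :: "nat list \<Rightarrow> int list" where "ys_of r = map int (take l (drop l r))"
definition zs_of :: "nat list \<Rightarrow> int list" where "zs_of r = map int (drop (2*l) r)"

definition incr :: "update \<Rightarrow> nat \<Rightarrow> nat \<Rightarrow> int" where
  "incr u i j = (case u of (a, b, d) \<Rightarrow> if {a, b} = {i, j} then d else 0)"

definition stepA :: "vst \<Rightarrow> update \<Rightarrow> vst" where
  "stepA st u = st\<lparr>a1v := modp (int (a1v st) + Atil l (incr u) (xs_of (rvv st)) (ys_of (rvv st))),
       a2v := modp (int (a2v st) + Atil l (incr u) (ys_of (rvv st)) (zs_of (rvv st))),
       a3v := modp (int (a3v st) + Atil l (incr u) (xs_of (rvv st)) (zs_of (rvv st)))\<rparr>"

definition init :: "nat list \<Rightarrow> vst" where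
  "init r = \<lparr>okf = True, tvv = 0, cvv = 0, a1v = 0, a2v = 0, a3v = 0, rvv = r\<rparr>"

definition msg :: "nat \<Rightarrow> nat list \<Rightarrow> bool list" where
  "msg i r = bits w (if i = 0 then 0 else r ! (i - 1))"

definition dg :: "bool list \<Rightarrow> nat \<Rightarrow> nat" where "dg a k = frombits a div p ^ k mod p"

definition recvA :: "nat \<Rightarrow> vst \<Rightarrow> bool list \<Rightarrow> vst" where
  "recvA i st a = (if i < mm then
       st\<lparr>okf := okf st \<and> (2 * dg a 0 + dg a 1 + dg a 2) mod p = (if i = 0 then (6 * dg a 3) mod p else cvv st),
          tvv := (if i = 0 then dg a 3 else tvv st),
          cvv := (dg a 0 + dg a 1 * rvv st ! i + dg a 2 * (rvv st ! i)^2) mod p\<rparr>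
     else if i = mm then st\<lparr>okf := okf st \<and> cvv st = (a1v st * a2v st * a3v st) mod p\<rparr>
     else st)"

definition V :: sip_verifier where
  "V = \<lparr>v_init = map_pmf (\<lambda>r. enc (init r)) (pmf_of_set (Rl p mm)),
        v_step = (\<lambda>s u. return_pmf (enc (stepA (dec s) u))),
        v_query = (\<lambda>i s. return_pmf (msg i (rvv (dec s)), s)),
        v_receive = (\<lambda>i s a. return_pmf (enc (recvA i (dec s) a))),
        v_out = (\<lambda>s. if okf (dec s) then Some (tvv (dec s)) else None),
        v_rounds = mm + 1\<rparr>"

lemma valid_stepA: "valid st \<Longrightarrow> valid (stepA st u)"
  by (simp add: valid_def stepA_def modp_lt)

lemma dg_lt: "dg a k < p" using p_pos by (simp add: dg_def)

lemma valid_recvA: "valid st \<Longrightarrow> valid (recvA i st a)"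
  using p_pos dg_lt unfolding valid_def recvA_def by auto

lemma valid_init: "r \<in> Rl p mm \<Longrightarrow> valid (init r)"
  using p_pos by (simp add: valid_def init_def)

lemma Rl_ne: "Rl p mm \<noteq> {}"
proof -
  have "replicate mm 0 \<in> Rl p mm" using p_pos by (auto simp: Rl_def set_replicate_conv_if)
  then show ?thesis by blast
qed

lemma set_D[simp]: "set_pmf (pmf_of_set (Rl p mm)) = Rl p mm"
  using Rl_ne by simp

lemma stream_gen:
  "(\<forall>r\<in>Rl p mm. valid (f r)) \<Longrightarrow>
   foldl (\<lambda>q u. bind_pmf q (\<lambda>s. v_step V s u)) (map_pmf (\<lambda>r. enc (f r)) (pmf_of_set (Rl p mm))) \<tau>
   = map_pmf (\<lambda>r. enc (foldl stepA (f r) \<tau>)) (pmf_of_set (Rl p mm))"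
proof (induction \<tau> arbitrary: f)
  case Nil then show ?case by simp
next
  case (Cons u \<tau>)
  have "bind_pmf (map_pmf (\<lambda>r. enc (f r)) (pmf_of_set (Rl p mm))) (\<lambda>s. v_step V s u)
      = map_pmf (\<lambda>r. enc (stepA (f r) u)) (pmf_of_set (Rl p mm))"
    unfolding map_pmf_def bind_assoc_pmf bind_return_pmf
    by (rule bind_pmf_cong) (use Cons.prems in \<open>auto simp: V_def dec_enc\<close>)
  moreover have "\<forall>r\<in>Rl p mm. valid (stepA (f r) u)" using Cons.prems valid_stepA by blast
  ultimately show ?case using Cons.IH[of "\<lambda>r. stepA (f r) u"] by simp
qed

lemma stream_collapse:
  "stream_run V \<tau> = map_pmf (\<lambda>r. enc (foldl stepA (init r) \<tau>)) (pmf_of_set (Rl p mm))"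
  unfolding stream_run_def using stream_gen[of init \<tau>] valid_init by (simp add: V_def)

fun interA :: "prover \<Rightarrow> nat \<Rightarrow> vst \<Rightarrow> (bool list \<times> bool list) list \<Rightarrow> vst \<times> (bool list \<times> bool list) list" where
  "interA P 0 st tr = (st, tr)"
| "interA P (Suc k) st tr = interA P k (recvA (length tr) st (P (map fst tr @ [msg (length tr) (rvv st)])))
      (tr @ [(msg (length tr) (rvv st), P (map fst tr @ [msg (length tr) (rvv st)]))])"

lemma valid_interA: "valid st \<Longrightarrow> valid (fst (interA P k st tr))"
  by (induction k arbitrary: st tr) (auto simp: valid_recvA)

lemma interact_collapse:
  "valid st \<Longrightarrow> interact V P k (enc st) tr = return_pmf (map_prod enc id (interA P k st tr))"
proof (induction k arbitrary: st tr)
  case 0 then show ?case by simp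
next
  case (Suc k)
  show ?case using Suc.prems Suc.IH[OF valid_recvA[OF Suc.prems]]
    by (simp add: V_def dec_enc bind_return_pmf Let_def)
qed

lemma run_collapse:
  "run V P \<tau> = map_pmf (\<lambda>r. case interA P (mm + 1) (foldl stepA (init r) \<tau>) [] of
       (st', tr) \<Rightarrow> (if okf st' then Some (tvv st') else None, tr)) (pmf_of_set (Rl p mm))"
proof -
  have v: "valid (foldl stepA (init r) \<tau>)" if "r \<in> Rl p mm" for r
  proof -
    have "valid st \<Longrightarrow> valid (foldl stepA st \<tau>)" for st
      by (induction \<tau> arbitrary: st) (auto simp: valid_stepA)
    then show ?thesis using valid_init[OF that] by blast
  qed
  let ?S = "\<lambda>r. foldl stepA (init r) \<tau>"
  let ?F = "\<lambda>(s, tr). (v_out V s, tr)"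
  let ?D = "pmf_of_set (Rl p mm)"
  have "run V P \<tau> = map_pmf ?F (bind_pmf (map_pmf (\<lambda>r. enc (?S r)) ?D) (\<lambda>s. interact V P (mm + 1) s []))"
    unfolding run_def stream_collapse by (simp add: V_def)
  also have "\<dots> = map_pmf ?F (bind_pmf ?D (\<lambda>r. interact V P (mm + 1) (enc (?S r)) []))"
    by (simp add: bind_map_pmf)
  also have "\<dots> = map_pmf ?F (bind_pmf ?D (\<lambda>r. return_pmf (map_prod enc id (interA P (mm + 1) (?S r) []))))"
    by (intro arg_cong[where f="map_pmf ?F"] bind_pmf_cong refl interact_collapse) (use v in simp)
  also have "\<dots> = map_pmf (\<lambda>r. ?F (map_prod enc id (interA P (mm + 1) (?S r) []))) ?D"
    by (simp add: map_pmf_def[symmetric] map_pmf_comp)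
  also have "\<dots> = map_pmf (\<lambda>r. case interA P (mm + 1) (?S r) [] of
       (st', tr) \<Rightarrow> (if okf st' then Some (tvv st') else None, tr)) ?D"
  proof (rule map_pmf_cong[OF refl])
    fix r assume "r \<in> set_pmf ?D"
    then have vr: "valid (?S r)" using v by simp
    obtain st' tr where e: "interA P (mm + 1) (?S r) [] = (st', tr)" by fastforce
    have vs: "valid st'" using valid_interA[OF vr, of P "mm+1" "[]"] e by simp
    show "?F (map_prod enc id (interA P (mm + 1) (?S r) [])) = (case interA P (mm + 1) (?S r) [] of
       (st', tr) \<Rightarrow> (if okf st' then Some (tvv st') else None, tr))"
      using e vs by (simp add: V_def dec_enc)
  qed
  finally show ?thesis .
qed

end


lemma Atil_add: "Atil l (\<lambda>i j. A i j + B i j) x y = Atil l A x y + Atil l B x y"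
  unfolding Atil_def by (simp add: sum.distrib algebra_simps)

lemma Atil_zero: "Atil l (\<lambda>i j. 0) x y = 0"
  unfolding Atil_def by simp

context proto
begin

lemma stream_vals:
  "rvv (foldl stepA (init r) \<tau>) = r \<and> okf (foldl stepA (init r) \<tau>) \<and> tvv (foldl stepA (init r) \<tau>) = 0
   \<and> cvv (foldl stepA (init r) \<tau>) = 0
   \<and> int (a1v (foldl stepA (init r) \<tau>)) = Atil l (mult \<tau>) (xs_of r) (ys_of r) mod int p
   \<and> int (a2v (foldl stepA (init r) \<tau>)) = Atil l (mult \<tau>) (ys_of r) (zs_of r) mod int p
   \<and> int (a3v (foldl stepA (init r) \<tau>)) = Atil l (mult \<tau>) (xs_of r) (zs_of r) mod int p"
proof (induction \<tau> rule: rev_induct)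
  case Nil
  have m0: "mult [] = (\<lambda>i j. 0)" by (simp add: fun_eq_iff)
  show ?case by (simp add: init_def m0 Atil_zero)
next
  case (snoc u \<tau>)
  have me: "mult (\<tau> @ [u]) = (\<lambda>i j. mult \<tau> i j + incr u i j)"
    by (simp add: fun_eq_iff mult_snoc incr_def)
  show ?case using snoc
    by (simp add: stepA_def int_modp me Atil_add mod_add_left_eq)
qed

lemma Fz_vals:
  "Fz l A (map int r) = Atil l A (xs_of r) (ys_of r) * Atil l A (ys_of r) (zs_of r) * Atil l A (xs_of r) (zs_of r)"
  by (simp add: Fz_def xs_of_def ys_of_def zs_of_def take_map drop_map)

definition aP :: "prover \<Rightarrow> nat list \<Rightarrow> nat \<Rightarrow> bool list" where
  "aP P r j = P (map (\<lambda>i. msg i r) [0..<Suc j])"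

fun stt :: "prover \<Rightarrow> vst \<Rightarrow> nat \<Rightarrow> vst" where
  "stt P st0 0 = st0"
| "stt P st0 (Suc k) = recvA k (stt P st0 k) (aP P (rvv st0) k)"

definition trc :: "prover \<Rightarrow> nat list \<Rightarrow> nat \<Rightarrow> (bool list \<times> bool list) list" where
  "trc P r k = map (\<lambda>j. (msg j r, aP P r j)) [0..<k]"

lemma recvA_keep: "rvv (recvA i st a) = rvv st \<and> a1v (recvA i st a) = a1v st \<and>
    a2v (recvA i st a) = a2v st \<and> a3v (recvA i st a) = a3v st"
  by (simp add: recvA_def)

lemma stt_keep: "rvv (stt P st0 k) = rvv st0 \<and> a1v (stt P st0 k) = a1v st0 \<and>
    a2v (stt P st0 k) = a2v st0 \<and> a3v (stt P st0 k) = a3v st0"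
  by (induction k) (auto simp: recvA_keep)

lemma interA_stt: "interA P k' (stt P st0 k) (trc P (rvv st0) k) = (stt P st0 (k + k'), trc P (rvv st0) (k + k'))"
proof (induction k' arbitrary: k)
  case 0 then show ?case by simp
next
  case (Suc k')
  have len: "length (trc P (rvv st0) k) = k" by (simp add: trc_def)
  have rv: "rvv (stt P st0 k) = rvv st0" using stt_keep by blast
  have "map fst (trc P (rvv st0) k) = map (\<lambda>i. msg i (rvv st0)) [0..<k]"
    by (simp add: trc_def comp_def)
  then have ap: "P (map fst (trc P (rvv st0) k) @ [msg k (rvv st0)]) = aP P (rvv st0) k"
    by (simp add: aP_def)
  have tr: "trc P (rvv st0) k @ [(msg k (rvv st0), aP P (rvv st0) k)] = trc P (rvv st0) (Suc k)"
    by (simp add: trc_def)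
  have "interA P (Suc k') (stt P st0 k) (trc P (rvv st0) k)
      = interA P k' (recvA k (stt P st0 k) (aP P (rvv st0) k)) (trc P (rvv st0) k @ [(msg k (rvv st0), aP P (rvv st0) k)])"
    by (simp only: interA.simps len rv ap)
  also have "\<dots> = interA P k' (stt P st0 (Suc k)) (trc P (rvv st0) (Suc k))"
    by (simp only: stt.simps tr)
  also have "\<dots> = (stt P st0 (k + Suc k'), trc P (rvv st0) (k + Suc k'))"
    using Suc.IH[of "Suc k"] by simp
  finally show ?case .
qed

lemma interA_run: "interA P (mm + 1) st0 [] = (stt P st0 (mm + 1), trc P (rvv st0) (mm + 1))"
  using interA_stt[of P "mm + 1" st0 0] by (simp add: trc_def)

end


lemma dvd_mod_diff: "int p dvd (int (x mod p) - int x)"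
proof -
  have "x = x div p * p + x mod p" by simp
  then have "int x = int (x div p) * int p + int (x mod p)" by (metis of_nat_add of_nat_mult)
  then have "int (x mod p) - int x = int p * (- int (x div p))" by (simp add: algebra_simps)
  then show ?thesis by (metis dvd_triv_left)
qed

lemma deg_quad: "degree [:a, b, c:] \<le> 2"
  by (simp add: degree_pCons_eq_if)

context proto
begin

definition aQ :: "prover \<Rightarrow> nat list \<Rightarrow> bool list" where
  "aQ P pre = P (map (\<lambda>i. msg i pre) [0..<Suc (length pre)])"

definition Gq :: "prover \<Rightarrow> nat list \<Rightarrow> int \<Rightarrow> int" where
  "Gq P pre X = int (dg (aQ P pre) 0) + int (dg (aQ P pre) 1) * X + int (dg (aQ P pre) 2) * X ^ 2"

definition Hq :: "update list \<Rightarrow> nat list \<Rightarrow> int \<Rightarrow> int" where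
  "Hq \<tau> pre X = Pz l (mult \<tau>) (Suc (length pre)) (map int pre @ [X])"

definition Bad :: "update list \<Rightarrow> prover \<Rightarrow> nat list \<Rightarrow> nat set" where
  "Bad \<tau> P pre = (if length pre < mm \<and> (\<exists>X. \<not> int p dvd (Gq P pre X - Hq \<tau> pre X))
      then {x. x < p \<and> int p dvd (Gq P pre (int x) - Hq \<tau> pre (int x))} else {})"

lemma aP_aQ: "j \<le> length r \<Longrightarrow> aP P r j = aQ P (take j r)"
proof -
  assume j: "j \<le> length r"
  have "map (\<lambda>i. msg i r) [0..<Suc j] = map (\<lambda>i. msg i (take j r)) [0..<Suc j]"
  proof (rule map_cong[OF refl])
    fix i assume "i \<in> set [0..<Suc j]"
    then have "i \<le> j" by auto
    then show "msg i r = msg i (take j r)" by (cases i) (simp_all add: msg_def)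
  qed
  moreover have "length (take j r) = j" using j by simp
  ultimately show ?thesis unfolding aP_def aQ_def by metis
qed

lemma card_Bad: "card (Bad \<tau> P pre \<inter> {..<p}) \<le> 2"
proof (cases "length pre < mm \<and> (\<exists>X. \<not> int p dvd (Gq P pre X - Hq \<tau> pre X))")
  case True
  then obtain X0 where X0: "\<not> int p dvd (Gq P pre X0 - Hq \<tau> pre X0)" by blast
  have "degle 2 (Hq \<tau> pre)" unfolding Hq_def using True Pz_deg[of pre "length pre" l "mult \<tau>"] by simp
  then obtain qH where qH: "degree qH \<le> 2" "\<And>X. Hq \<tau> pre X = poly qH X" unfolding degle_def by blast
  define q where "q = [:int (dg (aQ P pre) 0), int (dg (aQ P pre) 1), int (dg (aQ P pre) 2):] - qH"
  have pq: "poly q X = Gq P pre X - Hq \<tau> pre X" for X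
    by (simp add: q_def Gq_def qH(2) algebra_simps power2_eq_square)
  have dq: "degree q \<le> 2" unfolding q_def
    using degree_diff_le[OF deg_quad qH(1)] by simp
  have "card {x. x < p \<and> int p dvd poly q (int x)} \<le> 2"
    by (rule root_bound[OF p_prime dq, of X0]) (use X0 pq in simp)
  moreover have "Bad \<tau> P pre \<inter> {..<p} = {x. x < p \<and> int p dvd poly q (int x)}"
    using True by (auto simp: Bad_def pq)
  ultimately show ?thesis by simp
next
  case False
  have "Bad \<tau> P pre = {}" unfolding Bad_def using False by (rule if_not_P)
  then show ?thesis by simp
qed

lemma recvA_lt: "i < mm \<Longrightarrow>
   okf (recvA i st a) = (okf st \<and> (2 * dg a 0 + dg a 1 + dg a 2) mod p = (if i = 0 then 6 * dg a 3 mod p else cvv st))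
   \<and> tvv (recvA i st a) = (if i = 0 then dg a 3 else tvv st)
   \<and> cvv (recvA i st a) = (dg a 0 + dg a 1 * rvv st ! i + dg a 2 * (rvv st ! i)^2) mod p"
  by (simp add: recvA_def)

lemma recvA_mm: "okf (recvA mm st a) = (okf st \<and> cvv st = (a1v st * a2v st * a3v st) mod p)
   \<and> tvv (recvA mm st a) = tvv st"
  by (simp add: recvA_def)

lemma G01: "Gq P pre 0 + Gq P pre 1 = int (2 * dg (aQ P pre) 0 + dg (aQ P pre) 1 + dg (aQ P pre) 2)"
  by (simp add: Gq_def)

lemma Gcong: "int p dvd (int ((dg a 0 + dg a 1 * x + dg a 2 * x^2) mod p)
    - (int (dg a 0) + int (dg a 1) * int x + int (dg a 2) * int x ^ 2))"
  using dvd_mod_diff[of p "dg a 0 + dg a 1 * x + dg a 2 * x^2"] by simp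

lemma Hsplit: "k < mm \<Longrightarrow> length pre = k \<Longrightarrow>
    Pz l (mult \<tau>) k (map int pre) = Hq \<tau> pre 0 + Hq \<tau> pre 1"
  unfolding Hq_def using Pz_split[of k l "mult \<tau>" "map int pre"] by simp

lemma Hnext: "k < length r \<Longrightarrow> Hq \<tau> (take k r) (int (r ! k)) = Pz l (mult \<tau>) (Suc k) (map int (take (Suc k) r))"
  by (simp add: Hq_def take_Suc_conv_app_nth min_def)

lemma tv_stt:
  assumes "r \<in> Rl p mm" "rvv st0 = r"
  shows "1 \<le> k \<Longrightarrow> k \<le> mm + 1 \<Longrightarrow> tvv (stt P st0 k) = dg (aQ P []) 3"
proof (induction k rule: nat_induct_at_least)
  case base
  have "aP P r 0 = aQ P []" using aP_aQ[of 0 r P] by simp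
  then show ?case using assms l_pos recvA_lt[of 0 st0] by simp
next
  case (Suc k)
  have rv: "rvv (stt P st0 k) = r" using stt_keep assms by metis
  show ?case
  proof (cases "k < mm")
    case True
    then show ?thesis using Suc recvA_lt[of k "stt P st0 k"] assms by simp
  next
    case False
    then have "k = mm" using Suc by simp
    then show ?thesis using Suc recvA_mm[of "stt P st0 k"] assms by simp
  qed
qed

end


context proto
begin

lemma Pz0_tri:
  assumes v: "valid_stream n \<tau>" and nl: "n \<le> 2 ^ l"
  shows "Pz l (mult \<tau>) 0 [] = 6 * int (triangles n \<tau>)"
  using Pz_0[of l "mult \<tau>"] six_tri[OF v nl] by simp

lemma final_val:
  assumes "r \<in> Rl p mm"
  shows "int p dvd (int ((a1v (foldl stepA (init r) \<tau>) * a2v (foldl stepA (init r) \<tau>) * a3v (foldl stepA (init r) \<tau>)) mod p)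
     - Pz l (mult \<tau>) mm (map int r))"
proof -
  let ?s = "foldl stepA (init r) \<tau>"
  let ?A = "Atil l (mult \<tau>) (xs_of r) (ys_of r)" and ?B = "Atil l (mult \<tau>) (ys_of r) (zs_of r)"
    and ?C = "Atil l (mult \<tau>) (xs_of r) (zs_of r)"
  have e: "int (a1v ?s) = ?A mod int p" "int (a2v ?s) = ?B mod int p" "int (a3v ?s) = ?C mod int p"
    using stream_vals[of r \<tau>] by auto
  have "int ((a1v ?s * a2v ?s * a3v ?s) mod p) = (int (a1v ?s) * int (a2v ?s) * int (a3v ?s)) mod int p"
    by (simp add: of_nat_mod)
  also have "\<dots> = (?A * ?B * ?C) mod int p" unfolding e by (metis mod_mult_eq mod_mod_trivial)
  also have "?A * ?B * ?C = Pz l (mult \<tau>) mm (map int r)"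
    using Pz_last[of l "mult \<tau>" "map int r"] Fz_vals[of "mult \<tau>" r] by simp
  finally show ?thesis by (simp add: mod_eq_dvd_iff[symmetric] mod_mod_trivial)
qed

lemma sound_det:
  assumes v: "valid_stream n \<tau>" and nl: "n \<le> 2 ^ l" and Tp: "triangles n \<tau> < p" and p6: "6 < p"
    and r: "r \<in> Rl p mm"
    and nb: "\<forall>j<mm. r ! j \<notin> Bad \<tau> P (take j r)"
    and ok: "okf (stt P (foldl stepA (init r) \<tau>) (mm + 1))"
  shows "tvv (stt P (foldl stepA (init r) \<tau>) (mm + 1)) = triangles n \<tau>"
proof (rule ccontr)
  define st0 where "st0 = foldl stepA (init r) \<tau>"
  let ?S = "stt P st0" and ?T = "triangles n \<tau>" and ?M = "mult \<tau>"
  define t where "t = dg (aQ P []) 3"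
  define clm where "clm k = (if k = 0 then (6 * t) mod p else cvv (?S k))" for k
  assume ne: "tvv (stt P (foldl stepA (init r) \<tau>) (mm + 1)) \<noteq> ?T"
  have rv: "rvv st0 = r" using stream_vals st0_def by simp
  have lenr: "length r = mm" using r by (simp add: Rl_def)
  have rk: "r ! k < p" if "k < mm" for k
  proof -
    have "r ! k \<in> set r" using that lenr by simp
    then show ?thesis using r by (auto simp: Rl_def)
  qed
  have rvS: "rvv (?S k) = r" for k using stt_keep rv by metis
  have "tvv (?S (mm + 1)) = t" unfolding t_def by (rule tv_stt[OF r rv]) auto
  then have tT: "t \<noteq> ?T" using ne st0_def by simp
  have inv: "k \<le> mm \<Longrightarrow> okf (?S k) \<Longrightarrow> \<not> int p dvd (int (clm k) - Pz l ?M k (map int (take k r)))" for k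
  proof (induction k)
    case 0
    show ?case
    proof
      assume d: "int p dvd (int (clm 0) - Pz l ?M 0 (map int (take 0 r)))"
      have dm0: "int p dvd (int ((6 * t) mod p) - int (6 * t))" by (rule dvd_mod_diff)
      have "int p dvd (int (clm 0) - Pz l ?M 0 (map int (take 0 r))) - (int ((6 * t) mod p) - int (6 * t))"
        using d dm0 by (rule dvd_diff)
      moreover have "(int (clm 0) - Pz l ?M 0 (map int (take 0 r))) - (int ((6 * t) mod p) - int (6 * t))
          = 6 * (int t - int ?T)" using Pz0_tri[OF v nl] by (simp add: clm_def algebra_simps)
      ultimately have d6: "int p dvd 6 * (int t - int ?T)" by metis
      have P: "prime (int p)" using p_prime by simp
      have "\<not> int p dvd 6" using p6 by (auto dest: zdvd_imp_le)
      then have "int p dvd (int t - int ?T)" using d6 prime_dvd_mult_iff[OF P] by blast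
      moreover have "t < p" unfolding t_def by (rule dg_lt)
      ultimately show False using not_dvd_small[of t p ?T] Tp tT by blast
    qed
  next
    case (Suc k)
    have k: "k < mm" using Suc.prems by simp
    define pre where "pre = take k r"
    have lpre: "length pre = k" using k lenr by (simp add: pre_def)
    have a: "aP P r k = aQ P pre" using aP_aQ[of k r P] k lenr by (simp add: pre_def)
    let ?a = "aQ P pre"
    have SS: "?S (Suc k) = recvA k (?S k) ?a" using a rv by simp
    have okk: "okf (?S k)" and chk: "(2 * dg ?a 0 + dg ?a 1 + dg ?a 2) mod p = clm k"
      using Suc.prems(2) recvA_lt[OF k, of "?S k" ?a] SS
      by (auto simp: clm_def t_def pre_def split: if_splits)
    have IH: "\<not> int p dvd (int (clm k) - Pz l ?M k (map int pre))"
      using Suc.IH k okk by (simp add: pre_def)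
    have Hs: "Pz l ?M k (map int pre) = Hq \<tau> pre 0 + Hq \<tau> pre 1" using Hsplit[OF k lpre] .
    have ex: "\<exists>X. \<not> int p dvd (Gq P pre X - Hq \<tau> pre X)"
    proof (rule ccontr)
      assume "\<not> ?thesis"
      then have d0: "int p dvd (Gq P pre 0 - Hq \<tau> pre 0)" and d1: "int p dvd (Gq P pre 1 - Hq \<tau> pre 1)" by auto
      have dm: "int p dvd (int ((2 * dg ?a 0 + dg ?a 1 + dg ?a 2) mod p) - int (2 * dg ?a 0 + dg ?a 1 + dg ?a 2))"
        by (rule dvd_mod_diff)
      have "int p dvd (Gq P pre 0 - Hq \<tau> pre 0) + (Gq P pre 1 - Hq \<tau> pre 1)
           + (int ((2 * dg ?a 0 + dg ?a 1 + dg ?a 2) mod p) - int (2 * dg ?a 0 + dg ?a 1 + dg ?a 2))"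
        using d0 d1 dm by (intro dvd_add)
      moreover have "(Gq P pre 0 - Hq \<tau> pre 0) + (Gq P pre 1 - Hq \<tau> pre 1)
           + (int ((2 * dg ?a 0 + dg ?a 1 + dg ?a 2) mod p) - int (2 * dg ?a 0 + dg ?a 1 + dg ?a 2))
           = int (clm k) - Pz l ?M k (map int pre)"
        using G01[of P pre] Hs chk by simp
      ultimately show False using IH by simp
    qed
    have Bad_eq: "Bad \<tau> P pre = {x. x < p \<and> int p dvd (Gq P pre (int x) - Hq \<tau> pre (int x))}"
      unfolding Bad_def using ex lpre k by simp
    have nd: "\<not> int p dvd (Gq P pre (int (r ! k)) - Hq \<tau> pre (int (r ! k)))"
      using nb k rk[OF k] Bad_eq by (auto simp: pre_def)
    have cv: "clm (Suc k) = (dg ?a 0 + dg ?a 1 * r ! k + dg ?a 2 * (r ! k)^2) mod p"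
      using recvA_lt[OF k, of "?S k" ?a] SS rvS by (simp add: clm_def)
    have gc: "int p dvd (int (clm (Suc k)) - Gq P pre (int (r ! k)))"
      using Gcong[of ?a "r ! k"] cv by (simp add: Gq_def)
    have hn: "Hq \<tau> pre (int (r ! k)) = Pz l ?M (Suc k) (map int (take (Suc k) r))"
      unfolding pre_def using Hnext[of k r \<tau>] k lenr by simp
    show ?case
    proof
      assume d: "int p dvd (int (clm (Suc k)) - Pz l ?M (Suc k) (map int (take (Suc k) r)))"
      have "int p dvd (int (clm (Suc k)) - Pz l ?M (Suc k) (map int (take (Suc k) r))) - (int (clm (Suc k)) - Gq P pre (int (r ! k)))"
        using d gc by (rule dvd_diff)
      then have "int p dvd (Gq P pre (int (r ! k)) - Hq \<tau> pre (int (r ! k)))" using hn by (simp add: algebra_simps)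
      then show False using nd by simp
    qed
  qed
  have okS: "okf (?S (mm + 1))" using ok st0_def by simp
  have SS: "?S (mm + 1) = recvA mm (?S mm) (aP P r mm)" using rv by simp
  have okm: "okf (?S mm)" and cm: "cvv (?S mm) = (a1v (?S mm) * a2v (?S mm) * a3v (?S mm)) mod p"
    using okS SS recvA_mm[of "?S mm"] by auto
  have keep: "a1v (?S mm) = a1v st0" "a2v (?S mm) = a2v st0" "a3v (?S mm) = a3v st0"
    using stt_keep by metis+
  have "int p dvd (int (clm mm) - Pz l ?M mm (map int (take mm r)))"
    using final_val[OF r, of \<tau>] cm keep l_pos lenr by (simp add: clm_def st0_def)
  then show False using inv[of mm] okm by simp
qed

end


context proto
begin

definition hc :: "update list \<Rightarrow> nat list \<Rightarrow> nat \<times> nat \<times> nat" where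
  "hc \<tau> pre = (SOME c. fst c < p \<and> fst (snd c) < p \<and> snd (snd c) < p \<and>
     (\<forall>X. int p dvd (int (fst c) + int (fst (snd c)) * X + int (snd (snd c)) * X ^ 2 - Hq \<tau> pre X)))"

definition Hon :: "update list \<Rightarrow> nat \<Rightarrow> prover" where
  "Hon \<tau> T msgs = bits (4 * w) (encL p [fst (hc \<tau> (map (\<lambda>j. frombits (msgs ! j)) [1..<length msgs])),
      fst (snd (hc \<tau> (map (\<lambda>j. frombits (msgs ! j)) [1..<length msgs]))),
      snd (snd (hc \<tau> (map (\<lambda>j. frombits (msgs ! j)) [1..<length msgs]))), T])"

lemma hc_ok:
  assumes "length pre < mm"
  shows "fst (hc \<tau> pre) < p \<and> fst (snd (hc \<tau> pre)) < p \<and> snd (snd (hc \<tau> pre)) < p \<and>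
     (\<forall>X. int p dvd (int (fst (hc \<tau> pre)) + int (fst (snd (hc \<tau> pre))) * X + int (snd (snd (hc \<tau> pre))) * X ^ 2 - Hq \<tau> pre X))"
  unfolding hc_def
proof (rule someI_ex)
  have "degle 2 (Hq \<tau> pre)" unfolding Hq_def using assms Pz_deg[of pre "length pre" l "mult \<tau>"] by simp
  then obtain qH where qH: "degree qH \<le> 2" "\<And>X. Hq \<tau> pre X = poly qH X" unfolding degle_def by blast
  define c where "c = (nat (coeff qH 0 mod int p), nat (coeff qH 1 mod int p), nat (coeff qH 2 mod int p))"
  have ic: "int (nat (z mod int p)) = z mod int p" for z using p_pos by simp
  have lt: "nat (z mod int p) < p" for z using p_pos by (simp add: nat_less_iff)
  have dv: "int p dvd (z mod int p - z)" for z by (simp add: mod_eq_dvd_iff[symmetric])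
  have "int p dvd (int (fst c) + int (fst (snd c)) * X + int (snd (snd c)) * X ^ 2 - Hq \<tau> pre X)" for X
  proof -
    have e: "int (fst c) + int (fst (snd c)) * X + int (snd (snd c)) * X ^ 2 - Hq \<tau> pre X
      = (coeff qH 0 mod int p - coeff qH 0) + (coeff qH 1 mod int p - coeff qH 1) * X + (coeff qH 2 mod int p - coeff qH 2) * X ^ 2"
      unfolding qH(2) poly2[OF qH(1)] c_def fst_conv snd_conv ic by (simp add: algebra_simps)
    show ?thesis unfolding e by (intro dvd_add dvd_mult2 dv)
  qed
  then show "\<exists>c. fst c < p \<and> fst (snd c) < p \<and> snd (snd c) < p \<and>
     (\<forall>X. int p dvd (int (fst c) + int (fst (snd c)) * X + int (snd (snd c)) * X ^ 2 - Hq \<tau> pre X))"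
    by (intro exI[of _ c]) (simp add: c_def lt)
qed

lemma dg_enc4:
  assumes "c0 < p" "c1 < p" "c2 < p" "T < p" "k < 4"
  shows "dg (bits (4 * w) (encL p [c0, c1, c2, T])) k = [c0, c1, c2, T] ! k"
proof -
  have lt: "\<forall>x\<in>set [c0, c1, c2, T]. x < p" using assms by auto
  have l4: "length [c0, c1, c2, T] = 4" by simp
  have "encL p [c0, c1, c2, T] < p ^ 4" using encL_bound[OF lt] l4 by metis
  also have "\<dots> \<le> (2 ^ w) ^ 4" using p_w by (intro power_mono) auto
  also have "\<dots> = 2 ^ (4 * w)" by (simp add: power_mult[symmetric] mult.commute)
  finally have "frombits (bits (4 * w) (encL p [c0, c1, c2, T])) = encL p [c0, c1, c2, T]"
    by (rule frombits_bits)
  then show ?thesis unfolding dg_def using encL_digit[OF lt] assms(5) by simp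
qed

lemma pre_decode:
  assumes "\<forall>x\<in>set pre. x < p"
  shows "map (\<lambda>j. frombits (map (\<lambda>i. msg i pre) [0..<Suc (length pre)] ! j)) [1..<length (map (\<lambda>i. msg i pre) [0..<Suc (length pre)])] = pre"
proof (rule nth_equalityI)
  fix j assume "j < length (map (\<lambda>j. frombits (map (\<lambda>i. msg i pre) [0..<Suc (length pre)] ! j)) [1..<length (map (\<lambda>i. msg i pre) [0..<Suc (length pre)])])"
  then have j: "j < length pre" by (simp del: upt_Suc)
  have "pre ! j < 2 ^ w" using assms j p_w by (metis nth_mem order_less_le_trans)
  then show "map (\<lambda>j. frombits (map (\<lambda>i. msg i pre) [0..<Suc (length pre)] ! j)) [1..<length (map (\<lambda>i. msg i pre) [0..<Suc (length pre)])] ! j = pre ! j"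
    using j by (simp add: msg_def nth_append frombits_bits del: upt_Suc)
qed (simp del: upt_Suc)

lemma aQ_Hon:
  assumes "\<forall>x\<in>set pre. x < p"
  shows "aQ (Hon \<tau> T) pre = bits (4 * w) (encL p [fst (hc \<tau> pre), fst (snd (hc \<tau> pre)), snd (snd (hc \<tau> pre)), T])"
  unfolding aQ_def Hon_def pre_decode[OF assms] ..

end


context proto
begin

lemma valid_stt: "valid st0 \<Longrightarrow> valid (stt P st0 k)"
  by (induction k) (auto simp: valid_recvA)

lemma modp_eq: "y < p \<Longrightarrow> int p dvd (int x - int y) \<Longrightarrow> x mod p = y"
proof -
  assume y: "y < p" and d: "int p dvd (int x - int y)"
  have "int x mod int p = int y mod int p" using d by (simp add: mod_eq_dvd_iff)
  also have "\<dots> = int y" using y by simp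
  finally have "int (x mod p) = int y" by (simp add: of_nat_mod)
  then show ?thesis by simp
qed

lemma complete_det:
  assumes v: "valid_stream n \<tau>" and nl: "n \<le> 2 ^ l" and Tp: "triangles n \<tau> < p"
    and r: "r \<in> Rl p mm"
  shows "okf (stt (Hon \<tau> (triangles n \<tau>)) (foldl stepA (init r) \<tau>) (mm + 1)) \<and>
         tvv (stt (Hon \<tau> (triangles n \<tau>)) (foldl stepA (init r) \<tau>) (mm + 1)) = triangles n \<tau>"
proof -
  define st0 where "st0 = foldl stepA (init r) \<tau>"
  define T where "T = triangles n \<tau>"
  define H where "H = Hon \<tau> T"
  let ?S = "stt H st0" and ?M = "mult \<tau>"
  define t where "t = dg (aQ H []) 3"
  define clm where "clm k = (if k = 0 then (6 * t) mod p else cvv (?S k))" for k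
  have rv: "rvv st0 = r" and ok0: "okf st0" using stream_vals st0_def by auto
  have lenr: "length r = mm" using r by (simp add: Rl_def)
  have rlt: "\<forall>x\<in>set r. x < p" using r by (auto simp: Rl_def)
  have vst0: "valid st0" unfolding st0_def
  proof -
    have "valid st \<Longrightarrow> valid (foldl stepA st \<tau>)" for st
      by (induction \<tau> arbitrary: st) (auto simp: valid_stepA)
    then show "valid (foldl stepA (init r) \<tau>)" using valid_init[OF r] by blast
  qed
  have rvS: "rvv (?S k) = r" for k using stt_keep rv by metis
  have aH: "aQ H pre = bits (4 * w) (encL p [fst (hc \<tau> pre), fst (snd (hc \<tau> pre)), snd (snd (hc \<tau> pre)), T])"
    if "\<forall>x\<in>set pre. x < p" for pre unfolding H_def by (rule aQ_Hon[OF that])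
  have dgH: "dg (aQ H pre) 0 = fst (hc \<tau> pre) \<and> dg (aQ H pre) 1 = fst (snd (hc \<tau> pre)) \<and>
      dg (aQ H pre) 2 = snd (snd (hc \<tau> pre)) \<and> dg (aQ H pre) 3 = T"
    if "\<forall>x\<in>set pre. x < p" "length pre < mm" for pre
  proof -
    obtain c0 c1 c2 where hcv: "hc \<tau> pre = (c0, c1, c2)" by (metis prod_cases3)
    have lt: "c0 < p" "c1 < p" "c2 < p" using hc_ok[OF that(2), of \<tau>] hcv by auto
    have Tp': "T < p" using Tp by (simp add: T_def)
    have e: "aQ H pre = bits (4 * w) (encL p [c0, c1, c2, T])"
      using aH[OF that(1)] hcv by (simp only: fst_conv snd_conv)
    have d: "dg (aQ H pre) k = [c0, c1, c2, T] ! k" if "k < 4" for k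
      unfolding e by (rule dg_enc4[OF lt Tp' that])
    show ?thesis using d[of 0] d[of 1] d[of 2] d[of 3] hcv by simp
  qed
  have GH: "int p dvd (Gq H pre X - Hq \<tau> pre X)" if "\<forall>x\<in>set pre. x < p" "length pre < mm" for pre X
    using hc_ok[OF that(2), of \<tau>] dgH[OF that] by (simp add: Gq_def)
  have tT: "t = T" unfolding t_def using dgH[of "[]"] l_pos by simp
  have inv: "k \<le> mm \<Longrightarrow> okf (?S k) \<and> int p dvd (int (clm k) - Pz l ?M k (map int (take k r)))" for k
  proof (induction k)
    case 0
    have "int p dvd (int ((6 * t) mod p) - int (6 * t))" by (rule dvd_mod_diff)
    then show ?case using ok0 Pz0_tri[OF v nl] tT by (simp add: clm_def T_def)
  next
    case (Suc k)
    have k: "k < mm" using Suc.prems by simp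
    define pre where "pre = take k r"
    have lpre: "length pre = k" using k lenr by (simp add: pre_def)
    have plt: "\<forall>x\<in>set pre. x < p" using rlt by (auto simp: pre_def dest: in_set_takeD)
    have a: "aP H r k = aQ H pre" using aP_aQ[of k r H] k lenr by (simp add: pre_def)
    let ?a = "aQ H pre"
    have SS: "?S (Suc k) = recvA k (?S k) ?a" using a rv by simp
    have IH: "okf (?S k)" "int p dvd (int (clm k) - Pz l ?M k (map int pre))"
      using Suc.IH k by (auto simp: pre_def)
    have Hs: "Pz l ?M k (map int pre) = Hq \<tau> pre 0 + Hq \<tau> pre 1" using Hsplit[OF k lpre] .
    have clt: "clm k < p"
    proof (cases "k = 0")
      case True then show ?thesis using p_pos by (simp add: clm_def)
    next
      case False then show ?thesis using valid_stt[OF vst0, of H k] by (simp add: clm_def valid_def)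
    qed
    have d0: "int p dvd (Gq H pre 0 - Hq \<tau> pre 0)" and d1: "int p dvd (Gq H pre 1 - Hq \<tau> pre 1)"
      using GH[OF plt] lpre k by auto
    have "int p dvd (Gq H pre 0 - Hq \<tau> pre 0) + (Gq H pre 1 - Hq \<tau> pre 1) - (int (clm k) - Pz l ?M k (map int pre))"
      by (rule dvd_diff[OF dvd_add[OF d0 d1] IH(2)])
    also have "(Gq H pre 0 - Hq \<tau> pre 0) + (Gq H pre 1 - Hq \<tau> pre 1) - (int (clm k) - Pz l ?M k (map int pre))
       = int (2 * dg ?a 0 + dg ?a 1 + dg ?a 2) - int (clm k)"
      using G01[of H pre] Hs by simp
    finally have chk: "(2 * dg ?a 0 + dg ?a 1 + dg ?a 2) mod p = clm k" by (rule modp_eq[OF clt])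
    have okS: "okf (?S (Suc k))"
      using IH(1) chk recvA_lt[OF k, of "?S k" ?a] SS by (auto simp: clm_def t_def pre_def split: if_splits)
    have cv: "clm (Suc k) = (dg ?a 0 + dg ?a 1 * r ! k + dg ?a 2 * (r ! k)^2) mod p"
      using recvA_lt[OF k, of "?S k" ?a] SS rvS by (simp add: clm_def)
    have gc: "int p dvd (int (clm (Suc k)) - Gq H pre (int (r ! k)))"
      using Gcong[of ?a "r ! k"] cv by (simp add: Gq_def)
    have hn: "Hq \<tau> pre (int (r ! k)) = Pz l ?M (Suc k) (map int (take (Suc k) r))"
      unfolding pre_def using Hnext[of k r \<tau>] k lenr by simp
    have "int p dvd (int (clm (Suc k)) - Gq H pre (int (r ! k))) + (Gq H pre (int (r ! k)) - Hq \<tau> pre (int (r ! k)))"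
      using gc GH[OF plt] lpre k by (intro dvd_add) auto
    then have "int p dvd (int (clm (Suc k)) - Pz l ?M (Suc k) (map int (take (Suc k) r)))"
      using hn by simp
    then show ?case using okS by simp
  qed
  have SS: "?S (mm + 1) = recvA mm (?S mm) (aP H r mm)" using rv by simp
  have keep: "a1v (?S mm) = a1v st0" "a2v (?S mm) = a2v st0" "a3v (?S mm) = a3v st0"
    using stt_keep by metis+
  let ?prod = "a1v st0 * a2v st0 * a3v st0"
  have i1: "okf (?S mm)" "int p dvd (int (cvv (?S mm)) - Pz l ?M mm (map int r))"
    using inv[of mm] l_pos lenr by (auto simp: clm_def)
  have f: "int p dvd (int (?prod mod p) - Pz l ?M mm (map int r))"
    using final_val[OF r, of \<tau>] by (simp add: st0_def)
  have "int p dvd (int (?prod mod p) - Pz l ?M mm (map int r)) - (int (cvv (?S mm)) - Pz l ?M mm (map int r))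
     - (int (?prod mod p) - int ?prod)"
    by (rule dvd_diff[OF dvd_diff[OF f i1(2)] dvd_mod_diff[of p ?prod]])
  then have "int p dvd (int ?prod - int (cvv (?S mm)))" by (simp add: algebra_simps)
  then have "?prod mod p = cvv (?S mm)"
    using valid_stt[OF vst0, of H mm] by (intro modp_eq) (auto simp: valid_def)
  then have okF: "okf (?S (mm + 1))" using SS recvA_mm[of "?S mm"] i1(1) keep by simp
  have "tvv (?S (mm + 1)) = t" unfolding t_def by (rule tv_stt[OF r rv]) auto
  then show ?thesis using okF tT by (simp add: st0_def H_def T_def)
qed

end


context proto
begin

lemma valid_fold: "r \<in> Rl p mm \<Longrightarrow> valid (foldl stepA (init r) \<tau>)"
proof -
  assume r: "r \<in> Rl p mm"
  have "valid st \<Longrightarrow> valid (foldl stepA st \<tau>)" for st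
    by (induction \<tau> arbitrary: st) (auto simp: valid_stepA)
  then show ?thesis using valid_init[OF r] by blast
qed

lemma run_stt: "run V P \<tau> = map_pmf (\<lambda>r.
    (if okf (stt P (foldl stepA (init r) \<tau>) (mm + 1)) then Some (tvv (stt P (foldl stepA (init r) \<tau>) (mm + 1))) else None,
     trc P r (mm + 1))) (pmf_of_set (Rl p mm))"
  unfolding run_collapse
  apply (rule map_pmf_cong[OF refl])
  subgoal for r
    using conjunct1[OF stream_vals[of r \<tau>]] by (simp only: interA_run prod.case)
  done

lemma enc_lt: "valid st \<Longrightarrow> enc st < 2 ^ (w * (mm + 6))"
proof -
  assume "valid st"
  then have "enc st < p ^ (mm + 6)" by (rule enc_bound)
  also have "\<dots> \<le> (2 ^ w) ^ (mm + 6)" using p_w by (intro power_mono) auto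
  also have "\<dots> = 2 ^ (w * (mm + 6))" by (simp add: power_mult)
  finally show ?thesis .
qed

lemma space_V: "space_bounded (w * (mm + 6)) V"
  unfolding space_bounded_def
  by (auto simp: V_def intro!: enc_lt valid_init valid_stepA valid_recvA valid_dec)

lemma comm_Hon: "comm (trc (Hon \<tau> T) r (mm + 1)) = (mm + 1) * (5 * w)"
proof -
  have "comm (trc (Hon \<tau> T) r (mm + 1)) = (\<Sum>j\<leftarrow>[0..<mm + 1]. w + 4 * w)"
    unfolding comm_def trc_def by (simp add: msg_def aP_def Hon_def comp_def del: upt_Suc)
  also have "\<dots> = (mm + 1) * (5 * w)" by (simp add: sum_list_triv del: upt_Suc)
  finally show ?thesis .
qed

lemma completeness:
  assumes v: "valid_stream n \<tau>" and nl: "n \<le> 2 ^ l" and Tp: "triangles n \<tau> < p"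
  shows "measure_pmf.prob (run V (Hon \<tau> (triangles n \<tau>)) \<tau>) {x. fst x = Some (triangles n \<tau>)} \<ge> 2/3 \<and>
         (\<forall>x\<in>set_pmf (run V (Hon \<tau> (triangles n \<tau>)) \<tau>). comm (snd x) \<le> (mm + 1) * (5 * w))"
proof -
  let ?P = "Hon \<tau> (triangles n \<tau>)"
  let ?h = "\<lambda>r. (if okf (stt ?P (foldl stepA (init r) \<tau>) (mm + 1)) then Some (tvv (stt ?P (foldl stepA (init r) \<tau>) (mm + 1))) else None,
     trc ?P r (mm + 1))"
  have hr: "fst (?h r) = Some (triangles n \<tau>)" if "r \<in> Rl p mm" for r
    using complete_det[OF v nl Tp that] by simp
  have "measure_pmf.prob (run V ?P \<tau>) {x. fst x = Some (triangles n \<tau>)}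
      = measure_pmf.prob (pmf_of_set (Rl p mm)) (?h -` {x. fst x = Some (triangles n \<tau>)})"
    unfolding run_stt by simp
  also have "\<dots> = card (Rl p mm \<inter> ?h -` {x. fst x = Some (triangles n \<tau>)}) / card (Rl p mm)"
    using Rl_ne by (simp add: measure_pmf_of_set)
  also have "Rl p mm \<inter> ?h -` {x. fst x = Some (triangles n \<tau>)} = Rl p mm" using hr by blast
  also have "real (card (Rl p mm)) / card (Rl p mm) = 1" using Rl_ne by simp
  finally have "measure_pmf.prob (run V ?P \<tau>) {x. fst x = Some (triangles n \<tau>)} = 1" .
  moreover have "\<forall>x\<in>set_pmf (run V ?P \<tau>). comm (snd x) \<le> (mm + 1) * (5 * w)"
    unfolding run_stt using Rl_ne comm_Hon[of \<tau> "triangles n \<tau>"] by auto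
  ultimately show ?thesis by simp
qed

lemma soundness:
  assumes v: "valid_stream n \<tau>" and nl: "n \<le> 2 ^ l" and Tp: "triangles n \<tau> < p" and p6: "6 * mm \<le> p"
  shows "measure_pmf.prob (run V P \<tau>) {x. fst x = Some (triangles n \<tau>) \<or> fst x = None} \<ge> 2/3"
proof -
  let ?T = "triangles n \<tau>"
  let ?h = "\<lambda>r. (if okf (stt P (foldl stepA (init r) \<tau>) (mm + 1)) then Some (tvv (stt P (foldl stepA (init r) \<tau>) (mm + 1))) else None,
     trc P r (mm + 1))"
  let ?G = "Rl p mm \<inter> ?h -` {x. fst x = Some ?T \<or> fst x = None}"
  let ?B = "\<Union>j\<in>{..<mm}. {r \<in> Rl p mm. r ! j \<in> Bad \<tau> P (take j r)}"
  have p6': "6 < p" using p6 l_pos by simp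
  have sub: "Rl p mm - ?G \<subseteq> ?B"
  proof
    fix r assume r: "r \<in> Rl p mm - ?G"
    show "r \<in> ?B"
    proof (rule ccontr)
      assume "r \<notin> ?B"
      then have nb: "\<forall>j<mm. r ! j \<notin> Bad \<tau> P (take j r)" using r by auto
      have "fst (?h r) = Some ?T \<or> fst (?h r) = None"
        using sound_det[OF v nl Tp p6' _ nb] r by auto
      then show False using r by auto
    qed
  qed
  have cB: "card ?B \<le> mm * (2 * p ^ (mm - 1))"
  proof -
    have "card ?B \<le> (\<Sum>j<mm. card {r \<in> Rl p mm. r ! j \<in> Bad \<tau> P (take j r)})" by (rule card_UN_le) simp
    also have "\<dots> \<le> (\<Sum>j<mm. 2 * p ^ (mm - 1))"
      by (intro sum_mono count_prefix card_Bad) simp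
    finally show ?thesis by simp
  qed
  have fin: "finite (Rl p mm)" by simp
  have "card (Rl p mm - ?G) = card (Rl p mm) - card ?G" by (rule card_Diff_subset) auto
  moreover have "card ?G \<le> card (Rl p mm)" by (rule card_mono) auto
  ultimately have "card (Rl p mm) \<le> card ?G + card (Rl p mm - ?G)" by linarith
  also have "card (Rl p mm - ?G) \<le> card ?B" using sub by (intro card_mono) auto
  finally have cG: "p ^ mm \<le> card ?G + mm * (2 * p ^ (mm - 1))" using cB card_Rl by simp
  have pm: "real p ^ mm = real p * real p ^ (mm - 1)" using l_pos by (cases mm) auto
  have ppos: "real p ^ (mm - 1) > 0" using p_pos by simp
  have "measure_pmf.prob (run V P \<tau>) {x. fst x = Some ?T \<or> fst x = None} = card ?G / card (Rl p mm)"
    unfolding run_stt using Rl_ne by (simp add: measure_pmf_of_set)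
  also have "\<dots> = card ?G / real p ^ mm" by (simp add: card_Rl)
  also have "\<dots> \<ge> 2/3"
  proof -
    have "real (p ^ mm) \<le> real (card ?G + mm * (2 * p ^ (mm - 1)))"
      using cG by (simp only: of_nat_le_iff)
    then have "real p ^ mm \<le> card ?G + real mm * (2 * real p ^ (mm - 1))"
      by simp
    moreover have "real (6 * mm) * real p ^ (mm - 1) \<le> real p * real p ^ (mm - 1)"
      using p6 ppos by (intro mult_right_mono) auto
    ultimately have "2/3 * real p ^ mm \<le> card ?G" using pm by (simp add: algebra_simps)
    moreover have "real p ^ mm > 0" using p_pos by simp
    ultimately show ?thesis by (simp add: field_simps)
  qed
  finally show ?thesis .
qed

lemma SIP:
  assumes nl: "n \<le> 2 ^ l" and p6: "6 * mm \<le> p" and Tb: "\<And>\<tau>. valid_stream n \<tau> \<Longrightarrow> triangles n \<tau> < p"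
  shows "is_SIP (\<lambda>\<tau>. valid_stream n \<tau> \<and> length \<tau> \<le> n ^ d) (triangles n) (w * (mm + 6)) ((mm + 1) * (5 * w)) V"
  unfolding is_SIP_def
proof (intro conjI allI impI)
  show "space_bounded (w * (mm + 6)) V" by (rule space_V)
next
  fix \<tau> assume "valid_stream n \<tau> \<and> length \<tau> \<le> n ^ d"
  then have v: "valid_stream n \<tau>" by simp
  show "\<exists>P. 2 / 3 \<le> measure_pmf.prob (run V P \<tau>) {x. fst x = Some (triangles n \<tau>)} \<and>
           (\<forall>x\<in>set_pmf (run V P \<tau>). comm (snd x) \<le> (mm + 1) * (5 * w))"
    using completeness[OF v nl Tb[OF v]] by blast
next
  fix \<tau> P assume "valid_stream n \<tau> \<and> length \<tau> \<le> n ^ d"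
  then have v: "valid_stream n \<tau>" by simp
  show "2 / 3 \<le> measure_pmf.prob (run V P \<tau>) {x. fst x = Some (triangles n \<tau>) \<or> fst x = None}"
    using soundness[OF v nl Tb[OF v] p6] by blast
qed

end


lemma ceil_log:
  fixes x :: real assumes x: "1 \<le> x"
  shows "x \<le> 2 ^ nat \<lceil>log 2 x\<rceil> \<and> real (nat \<lceil>log 2 x\<rceil>) \<le> log 2 x + 1 \<and> log 2 x \<le> real (nat \<lceil>log 2 x\<rceil>)"
proof -
  have lg: "0 \<le> log 2 x" using x by simp
  then have c: "real (nat \<lceil>log 2 x\<rceil>) = of_int \<lceil>log 2 x\<rceil>" by simp
  have c1: "of_int \<lceil>log 2 x\<rceil> \<le> log 2 x + 1" using ceiling_correct[of "log 2 x"] by simp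
  have c2: "log 2 x \<le> of_int \<lceil>log 2 x\<rceil>" by simp
  have "x = 2 powr (log 2 x)" using x by simp
  also have "\<dots> \<le> 2 powr real (nat \<lceil>log 2 x\<rceil>)" using c c2 by (intro powr_mono) auto
  also have "\<dots> = 2 ^ nat \<lceil>log 2 x\<rceil>" by (rule powr_realpow) simp
  finally show ?thesis using c c1 c2 by simp
qed

theorem mainTheorem2:
  fixes d :: nat
  shows "\<exists>K::real. \<forall>n\<ge>2. \<exists>V S C.
           real S \<le> K * (log 2 (real n))^2 \<and> real C \<le> K * (log 2 (real n))^2 \<and>
           is_SIP (\<lambda>\<tau>. valid_stream n \<tau> \<and> length \<tau> \<le> n ^ d) (triangles n) S C V"
proof (intro exI[of _ 600] allI impI)
  fix n :: nat assume n2: "2 \<le> n"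
  define L where "L = log 2 (real n)"
  have L1: "1 \<le> L" unfolding L_def using n2 by (simp add: le_log_iff)
  define l where "l = nat \<lceil>L\<rceil>"
  have lfacts: "real n \<le> 2 ^ l" "real l \<le> L + 1" "L \<le> real l"
    using ceil_log[of "real n"] n2 unfolding l_def L_def by auto
  have "real n \<le> real (2 ^ l)" using lfacts(1) by simp
  then have nl: "n \<le> 2 ^ l" by (simp only: of_nat_le_iff)
  have lpos: "0 < l" using lfacts(3) L1 by simp
  have "real (2 ^ l) \<le> 2 powr (L + 1)"
  proof -
    have "real (2 ^ l) = 2 powr real l" by (simp add: powr_realpow)
    also have "\<dots> \<le> 2 powr (L + 1)" using lfacts(2) by (intro powr_mono) auto
    finally show ?thesis .
  qed
  also have "2 powr (L + 1) = 2 * real n" using n2 by (simp add: L_def powr_add)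
  finally have "real (2 ^ l) \<le> real (2 * n)" by simp
  then have "2 ^ l \<le> 2 * n" by (simp only: of_nat_le_iff)
  then have l2n: "l \<le> 2 * n" using less_exp[of l] by linarith
  define N where "N = 16 * n ^ 3"
  have "1 \<le> n ^ 3" using n2 by simp
  then have N8: "8 \<le> N" unfolding N_def by linarith
  obtain p where p: "prime p" "N < p" "p \<le> 2 * N ^ 2" using prime_window[OF N8] by blast
  define w where "w = nat \<lceil>log 2 (real p)\<rceil>"
  have p1: "1 \<le> real p" using p prime_ge_1_nat by simp
  have wfacts: "real p \<le> 2 ^ w" "real w \<le> log 2 (real p) + 1"
    using ceil_log[OF p1] unfolding w_def by auto
  have "real p \<le> real (2 ^ w)" using wfacts(1) by simp
  then have pw: "p \<le> 2 ^ w" by (simp only: of_nat_le_iff)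
  interpret P: proto l p w by unfold_locales (use p pw lpos in auto)
  have p6: "6 * (3 * l) \<le> p"
  proof -
    have "18 * l \<le> 36 * n" using l2n by simp
    also have "36 * n \<le> 16 * n ^ 3"
    proof -
      have "36 \<le> 16 * n ^ 2" using n2 power_mono[OF n2, of 2] by simp
      then have "36 * n \<le> 16 * n ^ 2 * n" by simp
      then show ?thesis by (simp add: power3_eq_cube power2_eq_square algebra_simps)
    qed
    finally show ?thesis using p(2) unfolding N_def by simp
  qed
  have Tb: "triangles n \<tau> < p" if "valid_stream n \<tau>" for \<tau>
  proof -
    have "6 * triangles n \<tau> \<le> n ^ 3" by (rule tri_bound[OF that])
    then show ?thesis using p(2) unfolding N_def by linarith
  qed
  have sip: "is_SIP (\<lambda>\<tau>. valid_stream n \<tau> \<and> length \<tau> \<le> n ^ d) (triangles n) (w * (3 * l + 6)) ((3 * l + 1) * (5 * w)) P.V"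
    by (rule P.SIP[OF nl p6 Tb])
  have wL: "real w \<le> 16 * L"
  proof -
    have "real p \<le> real (2 * N ^ 2)" using p(3) by (simp only: of_nat_le_iff)
    then have pN: "real p \<le> 2 * real N ^ 2" by simp
    have "log 2 (real p) \<le> log 2 (2 * real N ^ 2)"
      using pN p1 N8 by (subst log_le_cancel_iff) auto
    also have "log 2 (2 * real N ^ 2) = 9 + 6 * L"
    proof -
      have n0: "real n \<noteq> 0" using n2 by simp
      have l16: "log 2 (16::real) = 4"
      proof -
        have "log 2 ((2::real) ^ 4) = real 4 * log 2 2" by (rule log_nat_power) simp
        then show ?thesis by simp
      qed
      have "log 2 (2 * real N ^ 2) = log 2 2 + log 2 (real N ^ 2)" using N8 by (simp add: log_mult)
      also have "log 2 (real N ^ 2) = 2 * log 2 (real N)" by (simp add: log_nat_power)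
      also have "log 2 (real N) = log 2 16 + log 2 (real n ^ 3)" unfolding N_def using n0 by (simp add: log_mult)
      also have "log 2 (real n ^ 3) = 3 * L" unfolding L_def by (simp add: log_nat_power)
      finally show ?thesis using l16 by simp
    qed
    finally show ?thesis using wfacts(2) L1 by linarith
  qed
  have w0: "0 \<le> real w" by simp
  show "\<exists>V S C. real S \<le> 600 * (log 2 (real n))\<^sup>2 \<and> real C \<le> 600 * (log 2 (real n))\<^sup>2 \<and>
           is_SIP (\<lambda>\<tau>. valid_stream n \<tau> \<and> length \<tau> \<le> n ^ d) (triangles n) S C V"
  proof (intro exI conjI)
    show "is_SIP (\<lambda>\<tau>. valid_stream n \<tau> \<and> length \<tau> \<le> n ^ d) (triangles n) (w * (3 * l + 6)) ((3 * l + 1) * (5 * w)) P.V"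
      by (rule sip)
    have "real (w * (3 * l + 6)) = real w * (3 * real l + 6)" by simp
    also have "\<dots> \<le> (16 * L) * (12 * L)" using wL lfacts(2) L1 w0 by (intro mult_mono) auto
    also have "\<dots> \<le> 600 * (log 2 (real n))\<^sup>2" using L1 by (simp add: L_def power2_eq_square)
    finally show "real (w * (3 * l + 6)) \<le> 600 * (log 2 (real n))\<^sup>2" .
    have "real ((3 * l + 1) * (5 * w)) = (3 * real l + 1) * (5 * real w)" by (simp add: algebra_simps)
    also have "\<dots> \<le> (7 * L) * (5 * (16 * L))" using wL lfacts(2) L1 w0 by (intro mult_mono) auto
    also have "\<dots> \<le> 600 * (log 2 (real n))\<^sup>2" using L1 by (simp add: L_def power2_eq_square)
    finally show "real ((3 * l + 1) * (5 * w)) \<le> 600 * (log 2 (real n))\<^sup>2" .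
  qed
qed


end
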